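(* For every $m\ge1$, $\dim\mathcal{H}_{(m)}=\frac{1}{m^2}\sum_{d\mid m}\varphi(d)^2\,\big(\tfrac md\big)!\,d^{m/d}$, where $\varphi$ is Euler's totient function.
   Context: $\mathcal{H}_{(m)}$ is the quotient of the span in $\mathbb{C}[\mathbb{S}_m]$ of all $m$-cycles (permutations consisting of a single cycle of length $m$) by the span of those generalized Vassiliev elements all of whose terms are $m$-cycles. Generalized Vassiliev elements: for $m\ge2$, $\gamma\in\mathbb{S}_{m-1}$, $q\in[m-1]\cup\{*\}$ and $t\in\{0,\dots,m-1\}$, $\alpha_t\in\mathbb{S}_m$ is obtained by inserting a new point $x$ into the line $1<\dots<m-1$ in the gap between $t$ and $t+1$, relabeling in order, acting as $\gamma$ on old points except $q\mapsto x\mapsto\gamma(q)$ if $q\ne*$, $x$ fixed if $q=*$; for a cycle $v$ of $\gamma$, $E(\gamma,q,v)=\sum_{j\in v}(\alpha_{j-1}-\alpha_j)$. (Equivalently, $\dim\mathcal{H}_{(m)}$ is the number of orbits of the action of $\mathbb{Z}/m$ on the set of $m$-cycles in $\mathbb{S}_m$ by conjugation with powers of $(1,2,\dots,m)$.) *)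

theory Defs
  imports Complex_Main "HOL-Library.Function_Algebras" "HOL-Combinatorics.Permutations"
    "HOL-Number_Theory.Totient"
begin

text \<open>The group algebra C[S_m]: complex-valued functions on permutations of nat
  (permutations of [m] = {1..m} are the functions p with p permutes {1..m}).
  Scalar multiplication is pointwise.\<close>

type_synonym galg = "(nat \<Rightarrow> nat) \<Rightarrow> complex"

definition gscale :: "complex \<Rightarrow> galg \<Rightarrow> galg" where
  "gscale c f = (\<lambda>x. c * f x)"

definition gvec :: "(nat \<Rightarrow> nat) \<Rightarrow> galg" where
  "gvec p = (\<lambda>s. if s = p then 1 else 0)"

definition is_mcycle :: "nat \<Rightarrow> (nat \<Rightarrow> nat) \<Rightarrow> bool" where
  "is_mcycle m p \<longleftrightarrow> p permutes {1..m} \<and>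
     (\<forall>x\<in>{1..m}. \<forall>y\<in>{1..m}. \<exists>k. (p ^^ k) x = y)"

definition mcycles :: "nat \<Rightarrow> (nat \<Rightarrow> nat) set" where
  "mcycles m = {p. is_mcycle m p}"

text \<open>Relabelling of the old points after inserting a new point in the gap
  between t and t+1: old i \<le> t stays i, old i > t becomes i+1; the new point is t+1.\<close>
definition ins_shift :: "nat \<Rightarrow> nat \<Rightarrow> nat" where
  "ins_shift t i = (if i \<le> t then i else Suc i)"

text \<open>alpha_t for gamma in S_(m-1) and q in [m-1] (Some q) or q = * (None).\<close>
definition valpha :: "(nat \<Rightarrow> nat) \<Rightarrow> nat option \<Rightarrow> nat \<Rightarrow> nat \<Rightarrow> nat" where
  "valpha \<gamma> q t y =
     (if y = Suc t then (case q of None \<Rightarrow> Suc t | Some q' \<Rightarrow> ins_shift t (\<gamma> q'))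
      else (let i = (if y \<le> t then y else y - 1) in
            if q = Some i then Suc t else ins_shift t (\<gamma> i)))"

definition perm_cycles :: "nat \<Rightarrow> (nat \<Rightarrow> nat) \<Rightarrow> nat set set" where
  "perm_cycles n \<gamma> = {{(\<gamma> ^^ k) j | k. True} | j. j \<in> {1..n}}"

definition vass_elt :: "(nat \<Rightarrow> nat) \<Rightarrow> nat option \<Rightarrow> nat set \<Rightarrow> galg" where
  "vass_elt \<gamma> q v = (\<Sum>j\<in>v. gvec (valpha \<gamma> q (j - 1)) - gvec (valpha \<gamma> q j))"

definition vass_cyc_elts :: "nat \<Rightarrow> galg set" where
  "vass_cyc_elts m = {vass_elt \<gamma> q v | \<gamma> q v.
      2 \<le> m \<and> \<gamma> permutes {1..m-1} \<and> (q = None \<or> (\<exists>i\<in>{1..m-1}. q = Some i)) \<and>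
      v \<in> perm_cycles (m-1) \<gamma> \<and>
      (\<forall>j\<in>v. valpha \<gamma> q (j - 1) \<in> mcycles m \<and> valpha \<gamma> q j \<in> mcycles m)}"

text \<open>dim H_(m): dimension of span(m-cycles) / span(Vassiliev elements whose terms
  are all m-cycles). The second space is a subspace of the first, so the dimension of
  the quotient is the difference of the (finite) complex dimensions.\<close>
definition dim_H :: "nat \<Rightarrow> nat" where
  "dim_H m = vector_space.dim gscale (module.span gscale (gvec ` mcycles m))
            - vector_space.dim gscale (module.span gscale (vass_cyc_elts m))"

end

theory Submission
  imports Defs "HOL-Combinatorics.Orbits"
begin

lemma sum_fun_apply: "(sum f A) x = sum (\<lambda>a. f a x) A"
  by (induction A rule: infinite_finite_induct) auto

lemma minus_fun_apply': "((f::'a \<Rightarrow> 'b::ab_group_add) - g) x = f x - g x" by simp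

interpretation G: vector_space gscale
  by unfold_locales (auto simp: gscale_def algebra_simps fun_eq_iff)

lemma gvec_inj: "inj gvec"
  by (rule injI) (auto simp: gvec_def fun_eq_iff split: if_splits)

lemma gvec_indep: "G.independent (gvec ` A)"
proof
  assume "G.dependent (gvec ` A)"
  then obtain t u where t: "finite t" "t \<subseteq> gvec ` A" "(\<Sum>v\<in>t. gscale (u v) v) = 0" "\<exists>v\<in>t. u v \<noteq> 0"
    unfolding G.dependent_explicit by blast
  then obtain v where v: "v \<in> t" "u v \<noteq> 0" by blast
  then obtain s where s: "v = gvec s" using t by blast
  have "(\<Sum>w\<in>t. gscale (u w) w) s = 0" using t by simp
  hence "(\<Sum>w\<in>t. u w * w s) = 0" by (simp add: sum_fun_apply gscale_def)
  moreover have "(\<Sum>w\<in>t. u w * w s) = (\<Sum>w\<in>t. if w = v then u v else 0)"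
  proof (rule sum.cong)
    fix w assume "w \<in> t"
    then obtain s' where "w = gvec s'" using t by blast
    have "w s = (if s' = s then 1 else 0)" using \<open>w = gvec s'\<close> by (simp add: gvec_def)
    moreover have "s' = s \<longleftrightarrow> w = v" using s \<open>w = gvec s'\<close> gvec_inj by (auto dest: injD)
    ultimately show "u w * w s = (if w = v then u v else 0)" by auto
  qed simp
  ultimately show False using v t by simp
qed

lemma dim_gvec: "finite A \<Longrightarrow> G.dim (G.span (gvec ` A)) = card A"
  using gvec_indep[of A] G.dim_span_eq_card_independent card_image[OF inj_on_subset[OF gvec_inj]]
  by auto

lemma rep_indep:
  assumes R: "R \<subseteq> C" and rep: "rep ` C \<subseteq> R"
  shows "G.independent ((\<lambda>s. gvec s - gvec (rep s)) ` (C - R))"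
    and "inj_on (\<lambda>s. gvec s - gvec (rep s)) (C - R)"
proof -
  let ?b = "\<lambda>s. gvec s - gvec (rep s)"
  have ev: "?b s x = (if x = s then 1 else 0)" if "s \<in> C - R" "x \<in> C - R" for s x
    using that rep by (auto simp: gvec_def)
  show inj: "inj_on ?b (C - R)"
  proof (rule inj_onI)
    fix s s' assume a: "s \<in> C - R" "s' \<in> C - R" "?b s = ?b s'"
    hence "?b s s = ?b s' s" by simp
    thus "s = s'" using ev[OF a(1) a(1)] ev[OF a(2) a(1)] by (auto split: if_splits)
  qed
  show "G.independent (?b ` (C - R))"
  proof
    assume "G.dependent (?b ` (C - R))"
    then obtain t u where t: "finite t" "t \<subseteq> ?b ` (C - R)" "(\<Sum>v\<in>t. gscale (u v) v) = 0" "\<exists>v\<in>t. u v \<noteq> 0"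
      unfolding G.dependent_explicit by blast
    then obtain v where v: "v \<in> t" "u v \<noteq> 0" by blast
    then obtain s where s: "v = ?b s" "s \<in> C - R" using t by blast
    have "(\<Sum>w\<in>t. gscale (u w) w) s = 0" using t by simp
    hence "(\<Sum>w\<in>t. u w * w s) = 0" by (simp add: sum_fun_apply gscale_def)
    moreover have "(\<Sum>w\<in>t. u w * w s) = (\<Sum>w\<in>t. if w = v then u v else 0)"
    proof (rule sum.cong)
      fix w assume "w \<in> t"
      then obtain s' where s': "w = ?b s'" "s' \<in> C - R" using t by blast
      have "w s = (if s' = s then 1 else 0)" using ev[OF s'(2) s(2)] s' by simp
      moreover have "s' = s \<longleftrightarrow> w = v" using s s' inj_onD[OF inj] by blast
      ultimately show "u w * w s = (if w = v then u v else 0)" by auto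
    qed simp
    ultimately show False using v t by simp
  qed
qed

lemma dim_quot_general:
  assumes fin: "finite C" and R: "R \<subseteq> C" and rep: "rep ` C \<subseteq> R"
    and sp: "G.span W = G.span ((\<lambda>s. gvec s - gvec (rep s)) ` (C - R))"
  shows "G.dim (G.span (gvec ` C)) - G.dim (G.span W) = card R"
proof -
  have "G.dim (G.span W) = card ((\<lambda>s. gvec s - gvec (rep s)) ` (C - R))"
    using sp rep_indep[OF R rep] G.dim_span_eq_card_independent by metis
  also have "\<dots> = card (C - R)" using rep_indep(2)[OF R rep] by (rule card_image)
  also have "\<dots> = card C - card R" using R fin by (simp add: card_Diff_subset finite_subset)
  finally show ?thesis using dim_gvec[OF fin] card_mono[OF fin R] by (simp)
qed

definition cyc :: "nat \<Rightarrow> nat \<Rightarrow> nat" where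
  "cyc m i = (if 1 \<le> i \<and> i < m then Suc i else if i = m \<and> 0 < m then 1 else i)"

lemma cyc_pow_in:
  assumes "i \<in> {1..m}" shows "(cyc m ^^ k) i = (i - 1 + k) mod m + 1"
proof (induction k)
  case 0 then show ?case using assms by auto
next
  case (Suc k)
  have m: "0 < m" using assms by auto
  have r: "(i - 1 + k) mod m < m" using m by simp
  show ?case
  proof (cases "Suc ((i - 1 + k) mod m) = m")
    case True
    then show ?thesis using Suc m by (simp add: cyc_def mod_Suc)
  next
    case False
    then show ?thesis using Suc m r by (simp add: cyc_def mod_Suc)
  qed
qed

lemma cyc_out: "i \<notin> {1..m} \<Longrightarrow> cyc m i = i"
  by (auto simp: cyc_def)

lemma cyc_pow_out:
  assumes "i \<notin> {1..m}" shows "(cyc m ^^ k) i = i"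
  by (induction k) (use assms cyc_out in auto)

lemma cyc_pow_mod:
  assumes "0 < m" shows "cyc m ^^ k = cyc m ^^ (k mod m)"
proof
  fix i show "(cyc m ^^ k) i = (cyc m ^^ (k mod m)) i"
  proof (cases "i \<in> {1..m}")
    case True
    have "(i - 1 + k) mod m = (i - 1 + k mod m) mod m" by (rule mod_add_right_eq[symmetric])
    then show ?thesis by (simp only: cyc_pow_in[OF True])
  qed (simp add: cyc_pow_out)
qed

lemma cyc_pow_m: "cyc m ^^ m = id"
proof (cases "m = 0")
  case True then show ?thesis by simp
next
  case False
  then show ?thesis using cyc_pow_mod[of m m] by simp
qed

lemma cyc_pow_eq_iff:
  assumes "0 < m" "a < m" "b < m"
  shows "cyc m ^^ a = cyc m ^^ b \<longleftrightarrow> a = b"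
proof
  assume "cyc m ^^ a = cyc m ^^ b"
  hence "(cyc m ^^ a) 1 = (cyc m ^^ b) 1" by simp
  thus "a = b" using assms by (simp add: cyc_pow_in)
qed simp

lemma cyc_pow_id_iff:
  assumes "0 < m" shows "cyc m ^^ k = id \<longleftrightarrow> m dvd k"
proof -
  have "cyc m ^^ k = cyc m ^^ 0 \<longleftrightarrow> k mod m = 0"
    using cyc_pow_mod[OF assms, of k] cyc_pow_eq_iff[OF assms, of "k mod m" 0] assms by simp
  thus ?thesis by (simp add: dvd_eq_mod_eq_0)
qed

lemma cyc_permutes: "cyc m permutes {1..m}"
proof (rule bij_imp_permutes)
  show "bij_betw (cyc m) {1..m} {1..m}"
  proof (rule bij_betw_byWitness[where f' = "\<lambda>i. if i = 1 then m else i - 1"])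
    show "\<forall>a\<in>{1..m}. (if cyc m a = 1 then m else cyc m a - 1) = a" by (auto simp: cyc_def)
    show "\<forall>a\<in>{1..m}. cyc m (if a = 1 then m else a - 1) = a" by (auto simp: cyc_def)
    show "cyc m ` {1..m} \<subseteq> {1..m}" by (auto simp: cyc_def)
    show "(\<lambda>i. if i = 1 then m else i - 1) ` {1..m} \<subseteq> {1..m}" by auto
  qed
qed (simp add: cyc_out)

lemma funpow_permutes: "p permutes S \<Longrightarrow> (p ^^ n) permutes S"
  by (induction n) (auto intro: permutes_compose)

lemma cyc_pow_permutes: "(cyc m ^^ k) permutes {1..m}"
  by (rule funpow_permutes[OF cyc_permutes])

lemma cyc_in_mcycles:
  assumes "0 < m" shows "is_mcycle m (cyc m)"
  unfolding is_mcycle_def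
proof (intro conjI ballI cyc_permutes)
  fix x y assume x: "x \<in> {1..m}" and y: "y \<in> {1..m}"
  have "(cyc m ^^ (y + m - x)) x = (x - 1 + (y + m - x)) mod m + 1" using x by (rule cyc_pow_in)
  also have "x - 1 + (y + m - x) = (y - 1) + m" using x y by auto
  also have "((y - 1) + m) mod m = (y - 1) mod m" by (rule mod_add_self2)
  also have "(y - 1) mod m = y - 1" using y by auto
  finally have "(cyc m ^^ (y + m - x)) x = y" using y by simp
  then show "\<exists>k. (cyc m ^^ k) x = y" by blast
qed

lemma funpow_conj_comm_apply:
  assumes "t \<circ> f = f \<circ> s" shows "(t ^^ k) (f x) = f ((s ^^ k) x)"
proof (induction k)
  case (Suc k)
  have ts: "t (f y) = f (s y)" for y using assms by (metis comp_apply)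
  show ?case using Suc by (simp add: ts)
qed simp

lemma funpow_conj_comm:
  assumes "t \<circ> f = f \<circ> s" shows "(t ^^ k) \<circ> f = f \<circ> (s ^^ k)"
  using funpow_conj_comm_apply[OF assms] by (simp add: fun_eq_iff)

lemma mcycle_conj:
  assumes f: "f permutes {1..m}" and s: "is_mcycle m s" and ts: "t \<circ> f = f \<circ> s"
  shows "is_mcycle m t"
proof -
  have sp: "s permutes {1..m}" using s by (simp add: is_mcycle_def)
  have "t = t \<circ> (f \<circ> inv f)" using permutes_inverses(1)[OF f] by (simp add: fun_eq_iff)
  also have "\<dots> = f \<circ> s \<circ> inv f" using ts by (simp add: o_assoc)
  finally have teq: "t = f \<circ> s \<circ> inv f" .
  have tp: "t permutes {1..m}" unfolding teq
    by (intro permutes_compose permutes_inv f sp)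
  show ?thesis unfolding is_mcycle_def
  proof (intro conjI tp ballI)
    fix x y assume x: "x \<in> {1..m}" and y: "y \<in> {1..m}"
    have x': "inv f x \<in> {1..m}" "inv f y \<in> {1..m}" using x y permutes_inv[OF f] by (simp_all only: permutes_in_image)
    obtain k where "(s ^^ k) (inv f x) = inv f y" using s x' unfolding is_mcycle_def by blast
    hence "(t ^^ k) (f (inv f x)) = f (inv f y)" using funpow_conj_comm_apply[OF ts] by simp
    thus "\<exists>k. (t ^^ k) x = y" using permutes_inverses(1)[OF f] by auto
  qed
qed

lemma centralizer_cyc:
  assumes m: "0 < m" and h: "h permutes {1..m}" and hc: "h \<circ> cyc m = cyc m \<circ> h"
  shows "h = cyc m ^^ (h 1 - 1)" and "h 1 - 1 < m"
proof -
  have h1: "h 1 \<in> {1..m}" using h m by (simp only: permutes_in_image) auto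
  thus "h 1 - 1 < m" by auto
  show "h = cyc m ^^ (h 1 - 1)"
  proof
    fix i show "h i = (cyc m ^^ (h 1 - 1)) i"
    proof (cases "i \<in> {1..m}")
      case True
      have "i - 1 < m" using True by auto
      hence "i = (cyc m ^^ (i - 1)) 1" using True m by (simp add: cyc_pow_in)
      hence "h i = (cyc m ^^ (i - 1)) (h 1)"
        using funpow_conj_comm_apply[of "cyc m" h "cyc m" "i - 1" 1] hc by simp
      also have "\<dots> = (h 1 - 1 + (i - 1)) mod m + 1" using h1 by (simp add: cyc_pow_in)
      also have "\<dots> = (cyc m ^^ (h 1 - 1)) i" using True by (simp add: cyc_pow_in add.commute)
      finally show ?thesis .
    next
      case False
      then show ?thesis using h by (simp add: cyc_pow_out permutes_not_in)
    qed
  qed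
qed

lemma mcycle_orbit1:
  assumes m: "0 < m" and s: "is_mcycle m s"
  shows "(s ^^ m) 1 = 1" "inj_on (\<lambda>k. (s ^^ k) 1) {0..<m}"
proof -
  have sp: "s permutes {1..m}" using s by (simp add: is_mcycle_def)
  have perm: "permutation s" using sp by (auto simp: permutation_permutes)
  have self: "1 \<in> orbit s 1" by (rule permutation_self_in_orbit[OF perm])
  define n where "n = funpow_dist1 s 1 1"
  have orb: "orbit s 1 = (\<lambda>k. (s ^^ k) 1) ` {0..<n}" unfolding n_def by (rule orbit_conv_funpow_dist1[OF self])
  have inj: "inj_on (\<lambda>k. (s ^^ k) 1) {0..<n}" unfolding n_def by (rule inj_on_funpow_dist1[OF self])
  have sn: "(s ^^ n) 1 = 1" unfolding n_def by (rule funpow_dist1_prop[OF self])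
  have "orbit s 1 = {1..m}"
  proof
    show "orbit s 1 \<subseteq> {1..m}"
    proof
      fix y assume "y \<in> orbit s 1"
      then obtain k where "y = (s ^^ k) 1" by (auto simp: orbit_altdef_permutation[OF perm])
      thus "y \<in> {1..m}" using permutes_in_funpow_image[OF sp, of 1 k] m by auto
    qed
    show "{1..m} \<subseteq> orbit s 1"
    proof
      fix y assume y: "y \<in> {1..m}"
      have "1 \<in> {1..m}" using m by auto
      then obtain k where "(s ^^ k) 1 = y" using s y unfolding is_mcycle_def by blast
      thus "y \<in> orbit s 1" by (auto simp: orbit_altdef_permutation[OF perm])
    qed
  qed
  hence "card {1..m} = card {0..<n}" using orb card_image[OF inj] by simp
  hence nm: "n = m" by simp
  show "(s ^^ m) 1 = 1" using sn nm by simp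
  show "inj_on (\<lambda>k. (s ^^ k) 1) {0..<m}" using inj nm by simp
qed

lemma mcycle_conj_cyc:
  assumes m: "0 < m" and s: "is_mcycle m s"
  obtains f where "f permutes {1..m}" "s \<circ> f = f \<circ> cyc m"
proof -
  have sp: "s permutes {1..m}" using s by (simp add: is_mcycle_def)
  note o = mcycle_orbit1[OF m s]
  define f where "f = (\<lambda>i. if i \<in> {1..m} then (s ^^ (i - 1)) 1 else i)"
  have 1: "1 \<in> {1..m}" using m by auto
  have inj: "inj_on f {1..m}"
  proof (rule inj_onI)
    fix i j assume i: "i \<in> {1..m}" and j: "j \<in> {1..m}" and e: "f i = f j"
    hence "(s ^^ (i - 1)) 1 = (s ^^ (j - 1)) 1" by (simp add: f_def)
    hence "i - 1 = j - 1" using inj_onD[OF o(2)] i j by auto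
    thus "i = j" using i j by auto
  qed
  have img: "f ` {1..m} \<subseteq> {1..m}"
    using permutes_in_funpow_image[OF sp 1] by (auto simp: f_def)
  have "bij_betw f {1..m} {1..m}" using inj endo_inj_surj[OF _ img inj] by (simp add: bij_betw_def)
  hence fp: "f permutes {1..m}" by (rule bij_imp_permutes) (auto simp: f_def)
  have "s \<circ> f = f \<circ> cyc m"
  proof
    fix i show "(s \<circ> f) i = (f \<circ> cyc m) i"
    proof (cases "i \<in> {1..m}")
      case True
      show ?thesis
      proof (cases "i = m")
        case True
        have "(s ^^ m) 1 = (s ^^ Suc (m - 1)) 1" using m by simp
        also have "\<dots> = s ((s ^^ (m - 1)) 1)" by simp
        also have "\<dots> = (s \<circ> f) i" using True m by (simp add: f_def)
        finally show ?thesis using o(1) True m by (simp add: f_def cyc_def)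
      next
        case False
        hence "cyc m i = Suc i" "Suc i \<in> {1..m}" using \<open>i \<in> {1..m}\<close> by (auto simp: cyc_def)
        moreover have "Suc (i - 1) = i" using \<open>i \<in> {1..m}\<close> by auto
        ultimately show ?thesis using \<open>i \<in> {1..m}\<close>
          by (simp add: f_def) (metis funpow.simps(2) o_apply)
      qed
    next
      case False
      have a: "cyc m i = i" using False by (rule cyc_out)
      have b: "s i = i" using sp False by (rule permutes_not_in)
      have c: "f i = i" using False unfolding f_def by (simp only: if_False)
      show ?thesis using a b c by simp
    qed
  qed
  then show ?thesis using that fp by blast
qed

lemma comm_inv:
  assumes f: "f permutes S" and e: "s \<circ> f = f \<circ> c"
  shows "inv f \<circ> s = c \<circ> inv f"
proof
  fix y
  have "s (f (inv f y)) = f (c (inv f y))" using e by (metis comp_apply)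
  hence "s y = f (c (inv f y))" using permutes_inverses(1)[OF f] by simp
  thus "(inv f \<circ> s) y = (c \<circ> inv f) y" using permutes_inverses(2)[OF f] by simp
qed

lemma fiber_card:
  assumes m: "0 < m" and s: "is_mcycle m s"
  shows "card {f. f permutes {1..m} \<and> s \<circ> f = f \<circ> cyc m} = m"
proof -
  obtain f0 where f0: "f0 permutes {1..m}" "s \<circ> f0 = f0 \<circ> cyc m" using mcycle_conj_cyc[OF m s] by blast
  have ci: "inv f0 \<circ> s = cyc m \<circ> inv f0" by (rule comm_inv[OF f0])
  have eq: "{f. f permutes {1..m} \<and> s \<circ> f = f \<circ> cyc m} = (\<lambda>j. f0 \<circ> cyc m ^^ j) ` {0..<m}"
  proof
    show "(\<lambda>j. f0 \<circ> cyc m ^^ j) ` {0..<m} \<subseteq> {f. f permutes {1..m} \<and> s \<circ> f = f \<circ> cyc m}"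
    proof clarify
      fix j
      have pw: "s (f0 x) = f0 (cyc m x)" for x using f0(2) by (metis comp_apply)
      have "s \<circ> (f0 \<circ> cyc m ^^ j) = f0 \<circ> cyc m ^^ j \<circ> cyc m"
        by (simp add: fun_eq_iff pw funpow_swap1)
      then show "f0 \<circ> cyc m ^^ j permutes {1..m} \<and> s \<circ> (f0 \<circ> cyc m ^^ j) = f0 \<circ> cyc m ^^ j \<circ> cyc m"
        using permutes_compose[OF cyc_pow_permutes f0(1)] by (simp add: o_assoc)
    qed
    show "{f. f permutes {1..m} \<and> s \<circ> f = f \<circ> cyc m} \<subseteq> (\<lambda>j. f0 \<circ> cyc m ^^ j) ` {0..<m}"
    proof clarify
      fix f assume f: "f permutes {1..m}" "s \<circ> f = f \<circ> cyc m"
      define h where "h = inv f0 \<circ> f"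
      have hp: "h permutes {1..m}" unfolding h_def by (intro permutes_compose permutes_inv f f0)
      have "h \<circ> cyc m = inv f0 \<circ> (s \<circ> f)" using f(2) by (simp add: h_def o_assoc)
      also have "\<dots> = cyc m \<circ> h" using ci by (simp add: h_def o_assoc)
      finally have hc: "h \<circ> cyc m = cyc m \<circ> h" .
      note cz = centralizer_cyc[OF m hp hc]
      have "f = f0 \<circ> h" using permutes_inverses(1)[OF f0(1)] by (simp add: h_def fun_eq_iff)
      hence "f = f0 \<circ> cyc m ^^ (h 1 - 1)" using cz(1) by simp
      thus "f \<in> (\<lambda>j. f0 \<circ> cyc m ^^ j) ` {0..<m}" using cz(2) by auto
    qed
  qed
  have inj: "inj_on (\<lambda>j. f0 \<circ> cyc m ^^ j) {0..<m}"
  proof (rule inj_onI)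
    fix a b assume a: "a \<in> {0..<m}" and b: "b \<in> {0..<m}" and e: "f0 \<circ> cyc m ^^ a = f0 \<circ> cyc m ^^ b"
    have "cyc m ^^ a = cyc m ^^ b"
    proof
      fix x have "f0 ((cyc m ^^ a) x) = f0 ((cyc m ^^ b) x)" using e by (metis comp_apply)
      thus "(cyc m ^^ a) x = (cyc m ^^ b) x" using permutes_inj[OF f0(1)] by (auto dest: injD)
    qed
    thus "a = b" using cyc_pow_eq_iff[OF m] a b by auto
  qed
  show ?thesis unfolding eq using card_image[OF inj] by simp
qed

definition cinv :: "nat \<Rightarrow> nat \<Rightarrow> nat" where "cinv m = cyc m ^^ (m - 1)"
definition cconj :: "nat \<Rightarrow> (nat \<Rightarrow> nat) \<Rightarrow> nat \<Rightarrow> nat" where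
  "cconj m s = cyc m \<circ> s \<circ> cinv m"
definition orbC :: "nat \<Rightarrow> (nat \<Rightarrow> nat) \<Rightarrow> (nat \<Rightarrow> nat) set" where
  "orbC m s = (\<lambda>k. (cconj m ^^ k) s) ` {0..<m}"
definition stab :: "nat \<Rightarrow> (nat \<Rightarrow> nat) \<Rightarrow> nat set" where
  "stab m s = {k \<in> {0..<m}. (cconj m ^^ k) s = s}"
definition FixC :: "nat \<Rightarrow> nat \<Rightarrow> (nat \<Rightarrow> nat) set" where
  "FixC m k = {s \<in> mcycles m. (cconj m ^^ k) s = s}"

lemma cinv_pow: "cinv m ^^ k = cyc m ^^ ((m - 1) * k)"
  by (simp add: cinv_def funpow_mult)

lemma cyc_cinv_pow:
  assumes "0 < m" shows "cyc m ^^ k \<circ> cinv m ^^ k = id" "cinv m ^^ k \<circ> cyc m ^^ k = id"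
proof -
  have "(m - 1) * k + k = m * k" using assms by (cases m) auto
  hence "cyc m ^^ ((m - 1) * k + k) = id" using cyc_pow_id_iff[OF assms] by simp
  thus "cyc m ^^ k \<circ> cinv m ^^ k = id" "cinv m ^^ k \<circ> cyc m ^^ k = id"
    by (simp_all add: cinv_pow funpow_add[symmetric] add.commute)
qed

lemma conj_pow: "(cconj m ^^ k) s = cyc m ^^ k \<circ> s \<circ> cinv m ^^ k"
proof (induction k)
  case (Suc k)
  have "(cconj m ^^ Suc k) s = cconj m ((cconj m ^^ k) s)" by simp
  also have "\<dots> = cyc m \<circ> (cyc m ^^ k \<circ> s \<circ> cinv m ^^ k) \<circ> cinv m"
    by (simp only: Suc.IH cconj_def)
  also have "\<dots> = cyc m ^^ Suc k \<circ> s \<circ> cinv m ^^ Suc k"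
    by (simp add: fun_eq_iff funpow_swap1)
  finally show ?case .
qed simp

lemma conj_pow_comm:
  assumes "0 < m" shows "(cconj m ^^ k) s \<circ> cyc m ^^ k = cyc m ^^ k \<circ> s"
proof -
  have "(cconj m ^^ k) s \<circ> cyc m ^^ k = cyc m ^^ k \<circ> s \<circ> (cinv m ^^ k \<circ> cyc m ^^ k)"
    by (simp add: conj_pow o_assoc)
  thus ?thesis using cyc_cinv_pow(2)[OF assms, of k] by simp
qed

lemma conj_fix_iff:
  assumes "0 < m" shows "(cconj m ^^ k) s = s \<longleftrightarrow> s \<circ> cyc m ^^ k = cyc m ^^ k \<circ> s"
proof
  assume "(cconj m ^^ k) s = s"
  thus "s \<circ> cyc m ^^ k = cyc m ^^ k \<circ> s" using conj_pow_comm[OF assms, of k s] by simp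
next
  assume e: "s \<circ> cyc m ^^ k = cyc m ^^ k \<circ> s"
  have "(cconj m ^^ k) s = (cyc m ^^ k \<circ> s) \<circ> cinv m ^^ k" by (simp add: conj_pow)
  also have "\<dots> = s \<circ> (cyc m ^^ k \<circ> cinv m ^^ k)" by (simp add: e[symmetric] o_assoc)
  finally show "(cconj m ^^ k) s = s" using cyc_cinv_pow(1)[OF assms, of k] by simp
qed

lemma conj_pow_m:
  assumes "0 < m" shows "(cconj m ^^ m) s = s"
  using conj_fix_iff[OF assms] by (simp add: cyc_pow_m)

lemma conj_mod:
  assumes "0 < m" shows "(cconj m ^^ k) s = (cconj m ^^ (k mod m)) s"
  using funpow_mod_eq[where f="cconj m" and n=m and x=s and m=k, OF conj_pow_m[OF assms]] by simp

lemma inj_conj: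
  assumes "0 < m" shows "inj (cconj m)"
proof (rule injI)
  fix s t assume "cconj m s = cconj m t"
  hence "cinv m \<circ> cconj m s \<circ> cyc m = cinv m \<circ> cconj m t \<circ> cyc m" by simp
  moreover have "cinv m \<circ> cconj m u \<circ> cyc m = u" for u
  proof -
    have "cinv m \<circ> cconj m u \<circ> cyc m = (cinv m \<circ> cyc m) \<circ> u \<circ> (cinv m \<circ> cyc m)"
      by (simp add: cconj_def o_assoc)
    thus ?thesis using cyc_cinv_pow(2)[OF assms, of 1] by simp
  qed
  ultimately show "s = t" by simp
qed

lemma inj_conj_pow:
  assumes "0 < m" shows "inj (cconj m ^^ k)"
  using inj_fn[OF inj_conj[OF assms]] by simp

lemma conj_mcycle:
  assumes m: "0 < m" and s: "s \<in> mcycles m" shows "(cconj m ^^ k) s \<in> mcycles m"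
  using mcycle_conj[OF cyc_pow_permutes _ conj_pow_comm[OF m, of k s]] s by (simp add: mcycles_def)

lemma finite_mcycles: "finite (mcycles m)"
proof -
  have "mcycles m \<subseteq> {p. p permutes {1..m}}" by (auto simp: mcycles_def is_mcycle_def)
  thus ?thesis using finite_permutations[of "{1..m}"] finite_subset by auto
qed

lemma orbC_all:
  assumes "0 < m" shows "orbC m s = {(cconj m ^^ k) s | k. True}"
proof
  show "orbC m s \<subseteq> {(cconj m ^^ k) s | k. True}" unfolding orbC_def by blast
  show "{(cconj m ^^ k) s | k. True} \<subseteq> orbC m s"
  proof clarify
    fix k
    have "(cconj m ^^ k) s = (cconj m ^^ (k mod m)) s" by (rule conj_mod[OF assms])
    moreover have "k mod m \<in> {0..<m}" using assms by simp
    ultimately show "(cconj m ^^ k) s \<in> orbC m s" unfolding orbC_def by blast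
  qed
qed

lemma orbC_self: "0 < m \<Longrightarrow> s \<in> orbC m s"
  unfolding orbC_def by (auto intro!: image_eqI[where x=0])

lemma orbC_sub:
  assumes m: "0 < m" and t: "t \<in> orbC m s" shows "orbC m t \<subseteq> orbC m s"
proof -
  obtain j where j: "t = (cconj m ^^ j) s" using t by (auto simp: orbC_def)
  show ?thesis
  proof
    fix x assume "x \<in> orbC m t"
    then obtain k where "x = (cconj m ^^ k) t" by (auto simp: orbC_def)
    hence "x = (cconj m ^^ (k + j)) s" by (simp add: j funpow_add)
    thus "x \<in> orbC m s" unfolding orbC_all[OF m] by blast
  qed
qed

lemma orbC_sym:
  assumes m: "0 < m" and t: "t \<in> orbC m s" shows "s \<in> orbC m t"
proof -
  obtain j where j: "t = (cconj m ^^ j) s" "j < m" using t by (auto simp: orbC_def)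
  have "(cconj m ^^ (m - j)) t = (cconj m ^^ (m - j + j)) s" by (simp add: j funpow_add)
  also have "m - j + j = m" using j by simp
  finally have "(cconj m ^^ (m - j)) t = s" using conj_pow_m[OF m] by simp
  thus ?thesis unfolding orbC_all[OF m] by blast
qed

lemma orbC_eq:
  assumes m: "0 < m" and t: "t \<in> orbC m s" shows "orbC m t = orbC m s"
  using orbC_sub[OF m t] orbC_sub[OF m orbC_sym[OF m t]] by blast

lemma orbC_subset_C:
  assumes m: "0 < m" and s: "s \<in> mcycles m" shows "orbC m s \<subseteq> mcycles m"
  using conj_mcycle[OF m s] by (auto simp: orbC_def)

lemma orbit_stabilizer:
  assumes m: "0 < m" shows "card (orbC m s) * card (stab m s) = m"
proof -
  have "m = card {0..<m}" by simp
  also have "\<dots> = (\<Sum>t\<in>orbC m s. card {k \<in> {0..<m}. (cconj m ^^ k) s = t})"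
    unfolding orbC_def card_eq_sum by (rule sum.image_gen) simp
  also have "\<dots> = (\<Sum>t\<in>orbC m s. card (stab m s))"
  proof (rule sum.cong[OF refl])
    fix t assume "t \<in> orbC m s"
    then obtain j where j: "t = (cconj m ^^ j) s" "j < m" by (auto simp: orbC_def)
    have "bij_betw (\<lambda>k. (k + j) mod m) (stab m s) {k \<in> {0..<m}. (cconj m ^^ k) s = t}"
    proof (rule bij_betw_byWitness[where f'="\<lambda>k. (k + (m - j)) mod m"])
      show "\<forall>a\<in>stab m s. ((a + j) mod m + (m - j)) mod m = a"
      proof
        fix a assume "a \<in> stab m s"
        hence a: "a < m" by (simp add: stab_def)
        have "((a + j) mod m + (m - j)) mod m = (a + j + (m - j)) mod m" by (simp add: mod_add_left_eq)
        also have "a + j + (m - j) = a + m" using j by simp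
        finally show "((a + j) mod m + (m - j)) mod m = a" using a by simp
      qed
      show "\<forall>a\<in>{k \<in> {0..<m}. (cconj m ^^ k) s = t}. ((a + (m - j)) mod m + j) mod m = a"
      proof
        fix a assume "a \<in> {k \<in> {0..<m}. (cconj m ^^ k) s = t}"
        hence a: "a < m" by simp
        have "((a + (m - j)) mod m + j) mod m = (a + (m - j) + j) mod m" by (simp add: mod_add_left_eq)
        also have "a + (m - j) + j = a + m" using j by simp
        finally show "((a + (m - j)) mod m + j) mod m = a" using a by simp
      qed
      show "(\<lambda>k. (k + j) mod m) ` stab m s \<subseteq> {k \<in> {0..<m}. (cconj m ^^ k) s = t}"
      proof
        fix b assume "b \<in> (\<lambda>k. (k + j) mod m) ` stab m s"
        then obtain a where "a \<in> stab m s" and b: "b = (a + j) mod m" by blast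
        hence a: "(cconj m ^^ a) s = s" by (simp add: stab_def)
        have "(cconj m ^^ ((a + j) mod m)) s = (cconj m ^^ (j + a)) s"
          using conj_mod[OF m, of "j + a"] by (simp add: add.commute)
        also have "\<dots> = t" using a j by (simp add: funpow_add)
        finally show "b \<in> {k \<in> {0..<m}. (cconj m ^^ k) s = t}" using m b by simp
      qed
      show "(\<lambda>k. (k + (m - j)) mod m) ` {k \<in> {0..<m}. (cconj m ^^ k) s = t} \<subseteq> stab m s"
      proof
        fix b assume "b \<in> (\<lambda>k. (k + (m - j)) mod m) ` {k \<in> {0..<m}. (cconj m ^^ k) s = t}"
        then obtain a where a: "a \<in> {0..<m}" "(cconj m ^^ a) s = t" and b: "b = (a + (m - j)) mod m" by blast
        have "(cconj m ^^ j) ((cconj m ^^ ((a + (m - j)) mod m)) s) = (cconj m ^^ j) ((cconj m ^^ (a + (m - j))) s)"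
          using conj_mod[OF m, of "a + (m - j)"] by simp
        also have "\<dots> = (cconj m ^^ (j + (a + (m - j)))) s" by (simp add: funpow_add)
        also have "j + (a + (m - j)) = a + m" using j by simp
        also have "(cconj m ^^ (a + m)) s = (cconj m ^^ a) s" by (simp add: funpow_add conj_pow_m[OF m])
        also have "\<dots> = (cconj m ^^ j) s" using a j by simp
        finally have "(cconj m ^^ ((a + (m - j)) mod m)) s = s" using inj_conj_pow[OF m, of j] by (auto dest: injD)
        thus "b \<in> stab m s" using m b by (simp add: stab_def)
      qed
    qed
    thus "card {k \<in> {0..<m}. (cconj m ^^ k) s = t} = card (stab m s)" by (simp add: bij_betw_same_card)
  qed
  also have "\<dots> = card (orbC m s) * card (stab m s)" by simp
  finally show ?thesis by simp
qed

lemma burnside: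
  assumes m: "0 < m"
  shows "real m * real (card (orbC m ` mcycles m)) = (\<Sum>k<m. real (card (FixC m k)))"
proof -
  let ?C = "mcycles m"
  have finC: "finite ?C" by (rule finite_mcycles)
  have orbpos: "card (orbC m s) > 0" for s
    using orbC_self[OF m, of s] by (auto simp: orbC_def card_gt_0_iff)
  have "(\<Sum>s\<in>?C. 1 / real (card (orbC m s))) = (\<Sum>Q\<in>orbC m ` ?C. \<Sum>s\<in>{s \<in> ?C. orbC m s = Q}. 1 / real (card (orbC m s)))"
    by (rule sum.image_gen[OF finC])
  also have "\<dots> = (\<Sum>Q\<in>orbC m ` ?C. 1)"
  proof (rule sum.cong[OF refl])
    fix Q assume "Q \<in> orbC m ` ?C"
    then obtain s0 where s0: "s0 \<in> ?C" "Q = orbC m s0" by blast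
    have eq: "{s \<in> ?C. orbC m s = Q} = Q"
    proof
      show "{s \<in> ?C. orbC m s = Q} \<subseteq> Q" using orbC_self[OF m] by auto
      show "Q \<subseteq> {s \<in> ?C. orbC m s = Q}" using s0 orbC_subset_C[OF m s0(1)] orbC_eq[OF m] by auto
    qed
    have "(\<Sum>s\<in>{s \<in> ?C. orbC m s = Q}. 1 / real (card (orbC m s))) = (\<Sum>s\<in>Q. 1 / real (card Q))"
      unfolding eq by (rule sum.cong[OF refl]) (use s0 orbC_eq[OF m] in auto)
    also have "\<dots> = 1" using orbpos[of s0] s0 by simp
    finally show "(\<Sum>s\<in>{s \<in> ?C. orbC m s = Q}. 1 / real (card (orbC m s))) = 1" .
  qed
  finally have A: "(\<Sum>s\<in>?C. 1 / real (card (orbC m s))) = real (card (orbC m ` ?C))" by simp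
  have "real m * real (card (orbC m ` ?C)) = (\<Sum>s\<in>?C. real m / real (card (orbC m s)))"
    unfolding A[symmetric] by (simp add: sum_distrib_left)
  also have "\<dots> = (\<Sum>s\<in>?C. real (card (stab m s)))"
  proof (rule sum.cong[OF refl])
    fix s
    have "real (card (orbC m s)) * real (card (stab m s)) = real m"
      using orbit_stabilizer[OF m, of s] by (metis of_nat_mult)
    thus "real m / real (card (orbC m s)) = real (card (stab m s))"
      using orbpos[of s] by (simp add: field_simps)
  qed
  also have "\<dots> = (\<Sum>s\<in>?C. \<Sum>k<m. if (cconj m ^^ k) s = s then 1 else 0)"
    by (rule sum.cong[OF refl]) (simp add: stab_def sum.If_cases lessThan_atLeast0 Int_def)
  also have "\<dots> = (\<Sum>k<m. \<Sum>s\<in>?C. if (cconj m ^^ k) s = s then 1 else 0)"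
    by (rule sum.swap)
  also have "\<dots> = (\<Sum>k<m. real (card (FixC m k)))"
    by (rule sum.cong[OF refl]) (simp add: FixC_def sum.If_cases finC Int_def)
  finally show ?thesis .
qed

definition Nset :: "nat \<Rightarrow> nat \<Rightarrow> nat \<Rightarrow> (nat \<Rightarrow> nat) set" where
  "Nset m k j = {f. f permutes {1..m} \<and> cyc m ^^ k \<circ> f = f \<circ> cyc m ^^ j}"

lemma finite_Nset: "finite (Nset m k j)"
  by (rule finite_subset[OF _ finite_permutations[of "{1..m}"]]) (auto simp: Nset_def)

lemma cancel_right:
  assumes f: "f permutes S" and e: "a \<circ> f = b \<circ> f" shows "a = b"
proof
  fix x have "a (f (inv f x)) = b (f (inv f x))" using e by (metis comp_apply)
  thus "a x = b x" using permutes_inverses(1)[OF f] by simp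
qed

lemma cancel_left:
  assumes f: "f permutes S" and e: "f \<circ> a = f \<circ> b" shows "a = b"
proof
  fix x have "f (a x) = f (b x)" using e by (metis comp_apply)
  thus "a x = b x" using permutes_inj[OF f] by (auto dest: injD)
qed

lemma fix_lift_iff:
  assumes m: "0 < m" and f: "f permutes {1..m}"
  shows "(\<exists>s\<in>FixC m k. s \<circ> f = f \<circ> cyc m) \<longleftrightarrow> (\<exists>j<m. cyc m ^^ k \<circ> f = f \<circ> cyc m ^^ j)"
proof -
  define s where "s = f \<circ> cyc m \<circ> inv f"
  have sf: "s \<circ> f = f \<circ> cyc m" unfolding s_def using permutes_inverses(2)[OF f]
    by (simp add: fun_eq_iff)
  have sC: "s \<in> mcycles m" using mcycle_conj[OF f cyc_in_mcycles[OF m] sf] by (simp add: mcycles_def)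
  have uniq: "s' = s" if "s' \<circ> f = f \<circ> cyc m" for s' using cancel_right[OF f] that sf by metis
  have "(\<exists>s'\<in>FixC m k. s' \<circ> f = f \<circ> cyc m) \<longleftrightarrow> s \<circ> cyc m ^^ k = cyc m ^^ k \<circ> s"
  proof
    assume "\<exists>s'\<in>FixC m k. s' \<circ> f = f \<circ> cyc m"
    then obtain s' where "s' \<in> FixC m k" "s' \<circ> f = f \<circ> cyc m" by blast
    hence "s \<in> FixC m k" using uniq by blast
    thus "s \<circ> cyc m ^^ k = cyc m ^^ k \<circ> s" using conj_fix_iff[OF m] by (simp add: FixC_def)
  next
    assume "s \<circ> cyc m ^^ k = cyc m ^^ k \<circ> s"
    hence "s \<in> FixC m k" using conj_fix_iff[OF m] sC by (simp add: FixC_def)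
    thus "\<exists>s'\<in>FixC m k. s' \<circ> f = f \<circ> cyc m" using sf by blast
  qed
  also have "\<dots> \<longleftrightarrow> (\<exists>j<m. cyc m ^^ k \<circ> f = f \<circ> cyc m ^^ j)"
  proof
    assume c: "s \<circ> cyc m ^^ k = cyc m ^^ k \<circ> s"
    define h where "h = inv f \<circ> cyc m ^^ k \<circ> f"
    have hp: "h permutes {1..m}" unfolding h_def
      by (intro permutes_compose permutes_inv f cyc_pow_permutes)
    have ci: "inv f \<circ> s = cyc m \<circ> inv f" by (rule comm_inv[OF f sf])
    have "h \<circ> cyc m = inv f \<circ> cyc m ^^ k \<circ> (s \<circ> f)" by (simp add: h_def sf o_assoc)
    also have "\<dots> = (inv f \<circ> s) \<circ> cyc m ^^ k \<circ> f"
    proof -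
      have cp: "\<And>x. (cyc m ^^ k) (s x) = s ((cyc m ^^ k) x)" using c by (metis comp_apply)
      show ?thesis by (simp add: fun_eq_iff cp)
    qed
    also have "\<dots> = cyc m \<circ> h" by (simp add: ci h_def o_assoc)
    finally have hc: "h \<circ> cyc m = cyc m \<circ> h" .
    note cz = centralizer_cyc[OF m hp hc]
    have "cyc m ^^ k \<circ> f = f \<circ> h" unfolding h_def using permutes_inverses(1)[OF f] by (simp add: fun_eq_iff)
    thus "\<exists>j<m. cyc m ^^ k \<circ> f = f \<circ> cyc m ^^ j" using cz by metis
  next
    assume "\<exists>j<m. cyc m ^^ k \<circ> f = f \<circ> cyc m ^^ j"
    then obtain j where j: "cyc m ^^ k \<circ> f = f \<circ> cyc m ^^ j" by blast
    have jp: "(cyc m ^^ k) (f x) = f ((cyc m ^^ j) x)" for x using j by (metis comp_apply)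
    have sfp: "s (f x) = f (cyc m x)" for x using sf by (metis comp_apply)
    have "(s \<circ> cyc m ^^ k) \<circ> f = (cyc m ^^ k \<circ> s) \<circ> f"
      by (simp add: fun_eq_iff jp sfp funpow_swap1)
    then show "s \<circ> cyc m ^^ k = cyc m ^^ k \<circ> s" by (rule cancel_right[OF f])
  qed
  finally show ?thesis .
qed

lemma fix_count:
  assumes m: "0 < m"
  shows "m * card (FixC m k) = (\<Sum>j<m. card (Nset m k j))"
proof -
  let ?P = "{f. f permutes {1..m}}"
  define A where "A = {f \<in> ?P. \<exists>s\<in>FixC m k. s \<circ> f = f \<circ> cyc m}"
  have fib: "\<And>s. {f \<in> ?P. s \<circ> f = f \<circ> cyc m} = {f. f permutes {1..m} \<and> s \<circ> f = f \<circ> cyc m}" by auto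
  have "A = (\<Union>s\<in>FixC m k. {f \<in> ?P. s \<circ> f = f \<circ> cyc m})" by (auto simp: A_def)
  hence "card A = (\<Sum>s\<in>FixC m k. card {f \<in> ?P. s \<circ> f = f \<circ> cyc m})"
  proof (simp only:, intro card_UN_disjoint)
    show "finite (FixC m k)" using finite_mcycles by (auto simp: FixC_def)
    show "\<forall>s\<in>FixC m k. finite {f \<in> ?P. s \<circ> f = f \<circ> cyc m}"
      using finite_permutations[of "{1..m}"] by auto
    show "\<forall>s\<in>FixC m k. \<forall>t\<in>FixC m k. s \<noteq> t \<longrightarrow> {f \<in> ?P. s \<circ> f = f \<circ> cyc m} \<inter> {f \<in> ?P. t \<circ> f = f \<circ> cyc m} = {}"
    proof (intro ballI impI)
      fix s t :: "nat \<Rightarrow> nat" assume st: "s \<noteq> t"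
      show "{f \<in> ?P. s \<circ> f = f \<circ> cyc m} \<inter> {f \<in> ?P. t \<circ> f = f \<circ> cyc m} = {}"
      proof (rule ccontr)
        assume "{f \<in> ?P. s \<circ> f = f \<circ> cyc m} \<inter> {f \<in> ?P. t \<circ> f = f \<circ> cyc m} \<noteq> {}"
        then obtain f where f: "f permutes {1..m}" "s \<circ> f = f \<circ> cyc m" "t \<circ> f = f \<circ> cyc m" by blast
        have "s \<circ> f = t \<circ> f" using f by simp
        hence "s = t" by (rule cancel_right[OF f(1)])
        thus False using st by simp
      qed
    qed
  qed
  also have "\<dots> = (\<Sum>s\<in>FixC m k. m)"
  proof (rule sum.cong[OF refl])
    fix s assume "s \<in> FixC m k"
    hence "is_mcycle m s" by (simp add: FixC_def mcycles_def)
    thus "card {f \<in> ?P. s \<circ> f = f \<circ> cyc m} = m" using fiber_card[OF m] fib by simp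
  qed
  finally have 1: "card A = m * card (FixC m k)" by simp
  have "A = {f \<in> ?P. \<exists>j<m. cyc m ^^ k \<circ> f = f \<circ> cyc m ^^ j}"
    using fix_lift_iff[OF m] by (auto simp: A_def)
  also have "\<dots> = (\<Union>j\<in>{..<m}. Nset m k j)" by (auto simp: Nset_def)
  finally have "card A = card (\<Union>j\<in>{..<m}. Nset m k j)" by simp
  also have "\<dots> = (\<Sum>j<m. card (Nset m k j))"
  proof (rule card_UN_disjoint)
    show "\<forall>i\<in>{..<m}. \<forall>j\<in>{..<m}. i \<noteq> j \<longrightarrow> Nset m k i \<inter> Nset m k j = {}"
    proof (intro ballI impI)
      fix i j assume i: "i \<in> {..<m}" and j: "j \<in> {..<m}" and ij: "i \<noteq> j"
      show "Nset m k i \<inter> Nset m k j = {}"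
      proof (rule ccontr)
        assume "Nset m k i \<inter> Nset m k j \<noteq> {}"
        then obtain f where "f \<in> Nset m k i" "f \<in> Nset m k j" by blast
        hence "f permutes {1..m}" "f \<circ> cyc m ^^ i = f \<circ> cyc m ^^ j" by (auto simp: Nset_def)
        hence "cyc m ^^ i = cyc m ^^ j" by (rule cancel_left)
        thus False using cyc_pow_eq_iff[OF m] i j ij by auto
      qed
    qed
  qed (auto simp: finite_Nset)
  finally show ?thesis using 1 by simp
qed

lemma Nset_transfer:
  assumes f0: "f0 \<in> Nset m k j" shows "card (Nset m k j) = card (Nset m j j)"
proof -
  have f0p: "f0 permutes {1..m}" and f0c: "cyc m ^^ k \<circ> f0 = f0 \<circ> cyc m ^^ j" using f0 by (auto simp: Nset_def)
  have ci: "inv f0 \<circ> cyc m ^^ k = cyc m ^^ j \<circ> inv f0" by (rule comm_inv[OF f0p f0c])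
  have "bij_betw (\<lambda>h. f0 \<circ> h) (Nset m j j) (Nset m k j)"
  proof (rule bij_betw_byWitness[where f'="\<lambda>f. inv f0 \<circ> f"])
    show "\<forall>h\<in>Nset m j j. inv f0 \<circ> (f0 \<circ> h) = h"
      using permutes_inverses(2)[OF f0p] by (simp add: fun_eq_iff)
    show "\<forall>f\<in>Nset m k j. f0 \<circ> (inv f0 \<circ> f) = f"
      using permutes_inverses(1)[OF f0p] by (simp add: fun_eq_iff)
    show "(\<lambda>h. f0 \<circ> h) ` Nset m j j \<subseteq> Nset m k j"
    proof
      fix x assume "x \<in> (\<lambda>h. f0 \<circ> h) ` Nset m j j"
      then obtain h where h: "h permutes {1..m}" "cyc m ^^ j \<circ> h = h \<circ> cyc m ^^ j" and x: "x = f0 \<circ> h"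
        by (auto simp: Nset_def)
      have "cyc m ^^ k \<circ> x = f0 \<circ> (cyc m ^^ j \<circ> h)" using f0c by (simp add: x o_assoc)
      also have "\<dots> = x \<circ> cyc m ^^ j" using h by (simp add: x o_assoc)
      finally show "x \<in> Nset m k j" using permutes_compose[OF h(1) f0p] x by (simp add: Nset_def)
    qed
    show "(\<lambda>f. inv f0 \<circ> f) ` Nset m k j \<subseteq> Nset m j j"
    proof
      fix x assume "x \<in> (\<lambda>f. inv f0 \<circ> f) ` Nset m k j"
      then obtain f where f: "f permutes {1..m}" "cyc m ^^ k \<circ> f = f \<circ> cyc m ^^ j" and x: "x = inv f0 \<circ> f"
        by (auto simp: Nset_def)
      have "cyc m ^^ j \<circ> x = inv f0 \<circ> (cyc m ^^ k \<circ> f)" using ci by (simp add: x o_assoc)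
      also have "\<dots> = x \<circ> cyc m ^^ j" using f by (simp add: x o_assoc)
      finally show "x \<in> Nset m j j" using permutes_compose[OF f(1) permutes_inv[OF f0p]] x by (simp add: Nset_def)
    qed
  qed
  thus ?thesis by (simp add: bij_betw_same_card)
qed

lemma comm_funpow:
  assumes "A \<circ> h = h \<circ> A" shows "A ^^ n \<circ> h = h \<circ> A ^^ n"
  using funpow_conj_comm[OF assms] .

lemma cyc_pow_power_of:
  assumes m: "0 < m" shows "\<exists>a. cyc m ^^ (gcd j m) = (cyc m ^^ j) ^^ a"
proof (cases "j = 0")
  case True
  then show ?thesis using cyc_pow_m by (intro exI[of _ 1]) simp
next
  case False
  obtain x y where xy: "j * x = m * y + gcd j m" using bezout_nat[OF False] by blast
  have "(cyc m ^^ j) ^^ x = cyc m ^^ (j * x)" by (simp add: funpow_mult)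
  also have "\<dots> = cyc m ^^ ((j * x) mod m)" by (rule cyc_pow_mod[OF m])
  also have "(j * x) mod m = (gcd j m) mod m" unfolding xy by simp
  also have "cyc m ^^ (gcd j m mod m) = cyc m ^^ gcd j m" by (rule cyc_pow_mod[OF m, symmetric])
  finally show ?thesis by metis
qed

lemma Nset_gcd:
  assumes m: "0 < m" shows "Nset m j j = Nset m (gcd j m) (gcd j m)"
proof -
  obtain a where a: "cyc m ^^ (gcd j m) = (cyc m ^^ j) ^^ a" using cyc_pow_power_of[OF m] by blast
  have b: "cyc m ^^ j = (cyc m ^^ gcd j m) ^^ (j div gcd j m)" by (simp add: funpow_mult)
  show ?thesis
  proof (intro set_eqI iffI)
    fix h assume "h \<in> Nset m j j"
    hence "h permutes {1..m}" "cyc m ^^ j \<circ> h = h \<circ> cyc m ^^ j" by (auto simp: Nset_def)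
    thus "h \<in> Nset m (gcd j m) (gcd j m)" unfolding Nset_def a using comm_funpow by blast
  next
    fix h assume "h \<in> Nset m (gcd j m) (gcd j m)"
    hence "h permutes {1..m}" "cyc m ^^ gcd j m \<circ> h = h \<circ> cyc m ^^ gcd j m" by (auto simp: Nset_def)
    thus "h \<in> Nset m j j" unfolding Nset_def b using comm_funpow by blast
  qed
qed

lemma Nset_nonempty_gcd:
  assumes m: "0 < m" and f: "f \<in> Nset m k j" shows "gcd k m = gcd j m"
proof -
  have fp: "f permutes {1..m}" and fc: "cyc m ^^ k \<circ> f = f \<circ> cyc m ^^ j" using f by (auto simp: Nset_def)
  have iff: "m dvd k * n \<longleftrightarrow> m dvd j * n" for n
  proof -
    have e: "cyc m ^^ (k * n) \<circ> f = f \<circ> cyc m ^^ (j * n)"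
      using funpow_conj_comm[OF fc, of n] by (simp add: funpow_mult)
    have "cyc m ^^ (k * n) = id \<longleftrightarrow> cyc m ^^ (j * n) = id"
    proof
      assume "cyc m ^^ (k * n) = id"
      hence "f \<circ> cyc m ^^ (j * n) = f \<circ> id" using e by simp
      thus "cyc m ^^ (j * n) = id" by (rule cancel_left[OF fp])
    next
      assume "cyc m ^^ (j * n) = id"
      hence "cyc m ^^ (k * n) \<circ> f = id \<circ> f" using e by simp
      thus "cyc m ^^ (k * n) = id" by (rule cancel_right[OF fp])
    qed
    thus ?thesis using cyc_pow_id_iff[OF m] by simp
  qed
  have key: "gcd a m dvd b" if "\<And>n. m dvd a * n \<longleftrightarrow> m dvd b * n" for a b
  proof -
    define g where "g = gcd a m"
    have gpos: "g > 0" using m by (simp add: g_def)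
    have mg: "m = g * (m div g)" by (simp add: g_def)
    have "m dvd a * (m div g)"
    proof -
      have "a * (m div g) = (a div g) * m" using mg
        by (metis (no_types, lifting) dvd_div_mult_self g_def gcd_dvd1 mult.assoc mult.commute)
      thus ?thesis by simp
    qed
    hence "m dvd b * (m div g)" using that by blast
    hence "g * (m div g) dvd b * (m div g)" using mg by simp
    moreover have "m div g \<noteq> 0" using m gpos mg by (metis mult_0_right neq0_conv)
    ultimately show "g dvd b" by simp
  qed
  have "gcd k m dvd gcd j m" using key[of k j] iff by simp
  moreover have "gcd j m dvd gcd k m" using key[of j k] iff by simp
  ultimately show ?thesis by (rule dvd_antisym)
qed

lemma divmod_split:
  assumes "r < (g::nat)" shows "(r + g * u) mod g = r" "(r + g * u) div g = u"
  using assms by auto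

lemma modgd:
  assumes "r < (g::nat)" shows "(r + g * u) mod (g * d) = r + g * (u mod d)"
  using mod_mult2_eq[of "r + g * u" g d] divmod_split[OF assms] by simp

lemma dec:
  assumes "x \<in> {1..g * d}" "0 < (g::nat)"
  shows "x - 1 = (x - 1) mod g + g * ((x - 1) div g)" "(x - 1) mod g < g" "(x - 1) div g < d"
proof -
  show "x - 1 = (x - 1) mod g + g * ((x - 1) div g)" by simp
  show "(x - 1) mod g < g" using assms by simp
  have "x - 1 < g * d" using assms by auto
  thus "(x - 1) div g < d" by (simp add: less_mult_imp_div_less mult.commute)
qed

lemma bound_gd:
  assumes "p < (g::nat)" "u < d" shows "p + g * u + 1 \<in> {1..g * d}"
proof -
  have "g * u + g \<le> g * d" using assms(2) by (metis Suc_leI mult_Suc_right mult_le_mono2 add.commute)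
  thus ?thesis using assms(1) by auto
qed

definition Hf :: "nat \<Rightarrow> nat \<Rightarrow> (nat \<Rightarrow> nat) \<Rightarrow> (nat \<Rightarrow> nat) \<Rightarrow> nat \<Rightarrow> nat" where
  "Hf g d p a x = (if x \<in> {1..g * d} then p ((x - 1) mod g) + g * ((a ((x - 1) mod g) + (x - 1) div g) mod d) + 1 else x)"

lemma Hf_out: "x \<notin> {1..g * d} \<Longrightarrow> Hf g d p a x = x"
  unfolding Hf_def by (rule if_not_P)

lemma Hf_in: "x \<in> {1..g * d} \<Longrightarrow> Hf g d p a x = p ((x - 1) mod g) + g * ((a ((x - 1) mod g) + (x - 1) div g) mod d) + 1"
  unfolding Hf_def by (rule if_P)

context
  fixes g d :: nat and p a :: "nat \<Rightarrow> nat"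
  assumes g: "0 < g" and d: "0 < d" and p: "p permutes {0..<g}"
begin

lemma p_lt: "r < g \<Longrightarrow> p r < g"
  using permutes_in_image[OF p, of r] by simp

lemma Hf_range: "x \<in> {1..g * d} \<Longrightarrow> Hf g d p a x \<in> {1..g * d}"
  unfolding Hf_in using bound_gd[OF p_lt[OF dec(2)[OF _ g]], of x d "(a ((x - 1) mod g) + (x - 1) div g) mod d"] d
  by simp

lemma Hf_inj: "inj_on (Hf g d p a) {1..g * d}"
proof (rule inj_onI)
  fix x y assume x: "x \<in> {1..g * d}" and y: "y \<in> {1..g * d}" and e: "Hf g d p a x = Hf g d p a y"
  define r s r' s' where "r = (x - 1) mod g" "s = (x - 1) div g" "r' = (y - 1) mod g" "s' = (y - 1) div g"
  have rs: "r < g" "r' < g" "s < d" "s' < d" using dec[OF x g] dec[OF y g] by (auto simp: r_s_r'_s'_def)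
  have e2: "p r + g * ((a r + s) mod d) = p r' + g * ((a r' + s') mod d)"
    using e by (simp add: Hf_in[OF x] Hf_in[OF y] r_s_r'_s'_def)
  have "p r = p r'" using arg_cong[OF e2, of "\<lambda>z. z mod g"] divmod_split(1)[OF p_lt[OF rs(1)]] divmod_split(1)[OF p_lt[OF rs(2)]]
    by simp
  hence rr: "r = r'" using permutes_inj_on[OF p] rs by (auto dest: inj_onD)
  have "(a r + s) mod d = (a r + s') mod d"
    using arg_cong[OF e2, of "\<lambda>z. z div g"] divmod_split(2)[OF p_lt[OF rs(1)]] divmod_split(2)[OF p_lt[OF rs(2)]] rr
    by simp
  hence "[a r + s = a r + s'] (mod d)" by (simp add: cong_def)
  hence "[s = s'] (mod d)" using cong_add_lcancel_nat by blast
  hence "s = s'" using rs by (simp add: cong_def)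
  hence "x - 1 = y - 1" using dec(1)[OF x g] dec(1)[OF y g] rr by (simp add: r_s_r'_s'_def)
  thus "x = y" using x y by auto
qed

lemma Hf_permutes: "Hf g d p a permutes {1..g * d}"
proof (rule bij_imp_permutes)
  have "Hf g d p a ` {1..g * d} \<subseteq> {1..g * d}" using Hf_range by auto
  thus "bij_betw (Hf g d p a) {1..g * d} {1..g * d}"
    using endo_inj_surj[OF _ _ Hf_inj] Hf_inj by (simp add: bij_betw_def)
qed (simp add: Hf_out)

lemma Hf_comm: "cyc (g * d) ^^ g \<circ> Hf g d p a = Hf g d p a \<circ> cyc (g * d) ^^ g"
proof
  fix x show "(cyc (g * d) ^^ g \<circ> Hf g d p a) x = (Hf g d p a \<circ> cyc (g * d) ^^ g) x"
  proof (cases "x \<in> {1..g * d}")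
    case False
    then show ?thesis by (simp add: Hf_out cyc_pow_out)
  next
    case x: True
    define r s where "r = (x - 1) mod g" "s = (x - 1) div g"
    have rs: "r < g" "s < d" "x - 1 = r + g * s" using dec[OF x g] by (auto simp: r_s_def)
    have c1: "(cyc (g * d) ^^ g) x = r + g * (Suc s mod d) + 1"
    proof -
      have "(cyc (g * d) ^^ g) x = (x - 1 + g) mod (g * d) + 1" using x by (simp add: cyc_pow_in)
      also have "x - 1 + g = r + g * Suc s" using rs by simp
      also have "(r + g * Suc s) mod (g * d) = r + g * (Suc s mod d)" by (rule modgd[OF rs(1)])
      finally show ?thesis .
    qed
    have c1in: "(cyc (g * d) ^^ g) x \<in> {1..g * d}" using c1 bound_gd[OF rs(1), of "Suc s mod d" d] d by simp
    have lhs: "(Hf g d p a \<circ> cyc (g * d) ^^ g) x = p r + g * ((a r + Suc s mod d) mod d) + 1"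
    proof -
      have "(Hf g d p a \<circ> cyc (g * d) ^^ g) x = Hf g d p a ((cyc (g * d) ^^ g) x)" by simp
      also have "\<dots> = p (((cyc (g * d) ^^ g) x - 1) mod g) + g * ((a (((cyc (g * d) ^^ g) x - 1) mod g) + ((cyc (g * d) ^^ g) x - 1) div g) mod d) + 1"
        by (rule Hf_in[OF c1in])
      also have "\<dots> = p r + g * ((a r + Suc s mod d) mod d) + 1"
        unfolding c1 using divmod_split[OF rs(1)] by simp
      finally show ?thesis .
    qed
    have hx: "Hf g d p a x = p r + g * ((a r + s) mod d) + 1" by (simp add: Hf_in[OF x] r_s_def)
    have "(cyc (g * d) ^^ g \<circ> Hf g d p a) x = (p r + g * ((a r + s) mod d) + g) mod (g * d) + 1"
      using Hf_range[OF x] hx by (simp add: cyc_pow_in)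
    also have "p r + g * ((a r + s) mod d) + g = p r + g * Suc ((a r + s) mod d)" by simp
    also have "(p r + g * Suc ((a r + s) mod d)) mod (g * d) = p r + g * (Suc ((a r + s) mod d) mod d)"
      by (rule modgd[OF p_lt[OF rs(1)]])
    finally have rhs: "(cyc (g * d) ^^ g \<circ> Hf g d p a) x = p r + g * (Suc ((a r + s) mod d) mod d) + 1" .
    have "(a r + Suc s mod d) mod d = Suc (a r + s) mod d" by (simp add: mod_add_right_eq)
    moreover have "Suc ((a r + s) mod d) mod d = Suc (a r + s) mod d" by (simp add: mod_Suc_eq)
    ultimately show ?thesis using lhs rhs by simp
  qed
qed

lemma Hf_at: "r < g \<Longrightarrow> a r < d \<Longrightarrow> Hf g d p a (r + 1) = p r + g * a r + 1"
proof -
  assume r: "r < g" and ar: "a r < d"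
  have "r + 1 \<in> {1..g * d}" using bound_gd[OF r d] by simp
  thus ?thesis using r ar by (simp add: Hf_in)
qed

end

lemma cent_shift:
  assumes h: "h \<in> Nset m g g" shows "h ((cyc m ^^ (g * s)) z) = (cyc m ^^ (g * s)) (h z)"
proof -
  have "cyc m ^^ g \<circ> h = h \<circ> cyc m ^^ g" using h by (simp add: Nset_def)
  from funpow_conj_comm_apply[OF this, of s z] show ?thesis by (simp add: funpow_mult)
qed

lemma Nset_card_gd:
  assumes g: "0 < g" and d: "0 < d"
  shows "card (Nset (g * d) g g) = fact g * d ^ g"
proof -
  let ?m = "g * d"
  let ?D = "{p. p permutes {0..<g}} \<times> (PiE {0..<g} (\<lambda>_. {0..<d}))"
  let ?F = "\<lambda>(p, a). Hf g d p a"
  have inj: "inj_on ?F ?D"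
  proof (rule inj_onI, clarify)
    fix p a p' a' assume p: "p permutes {0..<g}" and a: "a \<in> PiE {0..<g} (\<lambda>_. {0..<d})"
      and p': "p' permutes {0..<g}" and a': "a' \<in> PiE {0..<g} (\<lambda>_. {0..<d})"
      and e: "Hf g d p a = Hf g d p' a'"
    have eq: "p r = p' r \<and> a r = a' r" for r
    proof (cases "r < g")
      case True
      have ar: "a r < d" "a' r < d" using PiE_mem[OF a, of r] PiE_mem[OF a', of r] True by auto
      have "p r + g * a r + 1 = p' r + g * a' r + 1"
        using Hf_at[where a=a, OF g d p True ar(1)] Hf_at[where a=a', OF g d p' True ar(2)] e by simp
      hence e2: "p r + g * a r = p' r + g * a' r" by simp
      have pl: "p r < g" "p' r < g" using p_lt[OF g d p True] p_lt[OF g d p' True] by auto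
      show ?thesis using arg_cong[OF e2, of "\<lambda>z. z mod g"] arg_cong[OF e2, of "\<lambda>z. z div g"]
          divmod_split[OF pl(1)] divmod_split[OF pl(2)] by simp
    next
      case False
      hence nr: "r \<notin> {0..<g}" by simp
      have "p r = r" "p' r = r" using permutes_not_in[OF p nr] permutes_not_in[OF p' nr] by auto
      moreover have "a r = undefined" "a' r = undefined" using PiE_arb[OF a nr] PiE_arb[OF a' nr] by auto
      ultimately show ?thesis by simp
    qed
    have "p = p'" using eq by (intro ext) blast
    moreover have "a = a'" using eq by (intro ext) blast
    ultimately show "p = p' \<and> a = a'" by blast
  qed
  have img: "?F ` ?D = Nset ?m g g"
  proof
    show "?F ` ?D \<subseteq> Nset ?m g g"
    proof
      fix h assume "h \<in> ?F ` ?D"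
      then obtain p a where p: "p permutes {0..<g}" and h: "h = Hf g d p a" by auto
      show "h \<in> Nset ?m g g" unfolding Nset_def h using Hf_permutes[OF g d p] Hf_comm[OF g d p] by simp
    qed
    show "Nset ?m g g \<subseteq> ?F ` ?D"
    proof
      fix h assume hN: "h \<in> Nset ?m g g"
      have hp: "h permutes {1..?m}" using hN by (simp add: Nset_def)
      define y where "y = (\<lambda>r. h (r + 1) - 1)"
      define p where "p = (\<lambda>r. if r < g then y r mod g else r)"
      define a where "a = restrict (\<lambda>r. y r div g) {0..<g}"
      have rin: "r + 1 \<in> {1..?m}" if "r < g" for r using bound_gd[OF that d] by simp
      have hin: "h (r + 1) \<in> {1..?m}" if "r < g" for r using permutes_in_image[OF hp] rin[OF that] by simp
      have ylt: "y r < ?m" if "r < g" for r using hin[OF that] by (auto simp: y_def)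
      have alt: "a r < d" if "r < g" for r
        using ylt[OF that] that by (simp add: a_def less_mult_imp_div_less mult.commute)
      have ydec: "y r = p r + g * a r" if "r < g" for r using that by (simp add: p_def a_def)
      have plt: "p r < g" if "r < g" for r using that g by (simp add: p_def)
      have shift: "(cyc ?m ^^ (g * t)) (r + 1) = r + g * t + 1" if "r < g" "t < d" for r t
      proof -
        have "(cyc ?m ^^ (g * t)) (r + 1) = (r + g * t) mod ?m + 1" using rin[OF that(1)] by (simp add: cyc_pow_in)
        also have "(r + g * t) mod ?m = r + g * (t mod d)" by (rule modgd[OF that(1)])
        finally show ?thesis using that by simp
      qed
      have hshift: "(cyc ?m ^^ (g * t)) (h (r + 1)) = p r + g * ((a r + t) mod d) + 1" if "r < g" for r t
      proof -
        have "(cyc ?m ^^ (g * t)) (h (r + 1)) = (y r + g * t) mod ?m + 1"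
          using hin[OF that] by (simp add: cyc_pow_in y_def)
        also have "y r + g * t = p r + g * (a r + t)" using ydec[OF that] by (simp add: algebra_simps)
        also have "(p r + g * (a r + t)) mod ?m = p r + g * ((a r + t) mod d)" by (rule modgd[OF plt[OF that]])
        finally show ?thesis .
      qed
      have pinj: "inj_on p {0..<g}"
      proof (rule inj_onI)
        fix r r' assume r: "r \<in> {0..<g}" and r': "r' \<in> {0..<g}" and e: "p r = p r'"
        define t where "t = (a r' + (d - a r)) mod d"
        have td: "t < d" using d by (simp add: t_def)
        have "(a r + t) mod d = (a r + (a r' + (d - a r))) mod d" by (simp add: t_def mod_add_right_eq)
        also have "a r + (a r' + (d - a r)) = a r' + d" using alt[of r] r by simp
        also have "(a r' + d) mod d = a r'" using alt[of r'] r' by simp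
        finally have "(cyc ?m ^^ (g * t)) (h (r + 1)) = p r' + g * a r' + 1" using hshift[of r t] r e by simp
        also have "\<dots> = h (r' + 1)" using ydec[of r'] r' hin[of r'] by (simp add: y_def, linarith)
        finally have "h ((cyc ?m ^^ (g * t)) (r + 1)) = h (r' + 1)" using cent_shift[OF hN] by simp
        hence "h (r + g * t + 1) = h (r' + 1)" using shift[OF _ td, of r] r by simp
        hence "r + g * t + 1 = r' + 1" using permutes_inj[OF hp] by (auto dest: injD)
        hence "r' = r + g * t" by simp
        hence "t = 0" using r' g by (cases t) auto
        thus "r = r'" using \<open>r' = r + g * t\<close> by simp
      qed
      have pp: "p permutes {0..<g}"
      proof (rule bij_imp_permutes)
        have "p ` {0..<g} \<subseteq> {0..<g}" using plt by auto
        thus "bij_betw p {0..<g} {0..<g}" using endo_inj_surj[OF _ _ pinj] pinj by (simp add: bij_betw_def)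
      qed (simp add: p_def)
      have ap: "a \<in> PiE {0..<g} (\<lambda>_. {0..<d})" using alt by (auto simp: a_def)
      have "h = Hf g d p a"
      proof
        fix x show "h x = Hf g d p a x"
        proof (cases "x \<in> {1..?m}")
          case False
          then show ?thesis using hp by (simp add: Hf_out permutes_not_in)
        next
          case x: True
          define r s where "r = (x - 1) mod g" "s = (x - 1) div g"
          have rs: "r < g" "s < d" "x - 1 = r + g * s" using dec[OF x g] by (auto simp: r_s_def)
          have "x = (cyc ?m ^^ (g * s)) (r + 1)" using shift[OF rs(1,2)] rs x by (simp, linarith)
          hence "h x = (cyc ?m ^^ (g * s)) (h (r + 1))" using cent_shift[OF hN] by simp
          also have "\<dots> = p r + g * ((a r + s) mod d) + 1" by (rule hshift[OF rs(1)])
          also have "\<dots> = Hf g d p a x" by (simp add: Hf_in[OF x] r_s_def)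
          finally show ?thesis .
        qed
      qed
      moreover have "(p, a) \<in> ?D" using pp ap by simp
      ultimately show "h \<in> ?F ` ?D" by (simp add: image_iff) blast
    qed
  qed
  have "card (Nset ?m g g) = card ?D" using card_image[OF inj] img by simp
  also have "\<dots> = fact g * d ^ g"
    by (simp add: card_cartesian_product card_permutations card_PiE)
  finally show ?thesis .
qed

definition Mf :: "nat \<Rightarrow> nat \<Rightarrow> nat \<Rightarrow> nat \<Rightarrow> nat" where
  "Mf g d v x = (if x \<in> {1..g * d} then (x - 1) mod g + g * (((x - 1) div g * v) mod d) + 1 else x)"

lemma Mf_out: "x \<notin> {1..g * d} \<Longrightarrow> Mf g d v x = x"
  unfolding Mf_def by (rule if_not_P)

lemma Mf_in: "x \<in> {1..g * d} \<Longrightarrow> Mf g d v x = (x - 1) mod g + g * (((x - 1) div g * v) mod d) + 1"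
  unfolding Mf_def by (rule if_P)

lemma Nset_exists:
  assumes g: "0 < g" and d: "0 < d" and jv: "[j' * v = 1] (mod d)"
  shows "Mf g d v \<in> Nset (g * d) g (g * j')"
proof -
  let ?m = "g * d"
  have range: "Mf g d v x \<in> {1..?m}" if x: "x \<in> {1..?m}" for x
    using bound_gd[OF dec(2)[OF x g], of "((x - 1) div g * v) mod d" d] d by (simp add: Mf_in[OF x])
  have inj: "inj_on (Mf g d v) {1..?m}"
  proof (rule inj_onI)
    fix x y assume x: "x \<in> {1..?m}" and y: "y \<in> {1..?m}" and e: "Mf g d v x = Mf g d v y"
    define r s r' s' where "r = (x - 1) mod g" "s = (x - 1) div g" "r' = (y - 1) mod g" "s' = (y - 1) div g"
    have rs: "r < g" "r' < g" "s < d" "s' < d" using dec[OF x g] dec[OF y g] by (auto simp: r_s_r'_s'_def)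
    have e2: "r + g * ((s * v) mod d) = r' + g * ((s' * v) mod d)"
      using e by (simp add: Mf_in[OF x] Mf_in[OF y] r_s_r'_s'_def)
    have rr: "r = r'" using arg_cong[OF e2, of "\<lambda>z. z mod g"] divmod_split(1)[OF rs(1)] divmod_split(1)[OF rs(2)]
      by simp
    have "(s * v) mod d = (s' * v) mod d"
      using arg_cong[OF e2, of "\<lambda>z. z div g"] divmod_split(2)[OF rs(1)] divmod_split(2)[OF rs(2)] rr
      by simp
    hence "[s * v = s' * v] (mod d)" by (simp add: cong_def)
    hence "[s * v * j' = s' * v * j'] (mod d)" by (rule cong_mult) simp
    moreover have "[s * v * j' = s] (mod d)" for s
    proof -
      have "[s * (j' * v) = s * 1] (mod d)" by (rule cong_mult[OF cong_refl jv])
      thus ?thesis by (simp add: mult.commute mult.left_commute)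
    qed
    ultimately have "[s = s'] (mod d)" by (meson cong_sym cong_trans)
    hence "s = s'" using rs by (simp add: cong_def)
    hence "x - 1 = y - 1" using dec(1)[OF x g] dec(1)[OF y g] rr by (simp add: r_s_r'_s'_def)
    thus "x = y" using x y by auto
  qed
  have perm: "Mf g d v permutes {1..?m}"
  proof (rule bij_imp_permutes)
    have "Mf g d v ` {1..?m} \<subseteq> {1..?m}" using range by auto
    thus "bij_betw (Mf g d v) {1..?m} {1..?m}" using endo_inj_surj[OF _ _ inj] inj by (simp add: bij_betw_def)
  qed (simp add: Mf_out)
  have comm: "cyc ?m ^^ g \<circ> Mf g d v = Mf g d v \<circ> cyc ?m ^^ (g * j')"
  proof
    fix x show "(cyc ?m ^^ g \<circ> Mf g d v) x = (Mf g d v \<circ> cyc ?m ^^ (g * j')) x"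
    proof (cases "x \<in> {1..?m}")
      case False
      then show ?thesis by (simp add: Mf_out cyc_pow_out)
    next
      case x: True
      define r s where "r = (x - 1) mod g" "s = (x - 1) div g"
      have rs: "r < g" "s < d" "x - 1 = r + g * s" using dec[OF x g] by (auto simp: r_s_def)
      have c1: "(cyc ?m ^^ (g * j')) x = r + g * ((s + j') mod d) + 1"
      proof -
        have "(cyc ?m ^^ (g * j')) x = (x - 1 + g * j') mod ?m + 1" using x by (simp add: cyc_pow_in)
        also have "x - 1 + g * j' = r + g * (s + j')" using rs by (simp add: algebra_simps)
        also have "(r + g * (s + j')) mod ?m = r + g * ((s + j') mod d)" by (rule modgd[OF rs(1)])
        finally show ?thesis .
      qed
      have c1in: "(cyc ?m ^^ (g * j')) x \<in> {1..?m}" using c1 bound_gd[OF rs(1), of "(s + j') mod d" d] d by simp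
      have lhs: "(Mf g d v \<circ> cyc ?m ^^ (g * j')) x = r + g * ((((s + j') mod d) * v) mod d) + 1"
      proof -
        have "(Mf g d v \<circ> cyc ?m ^^ (g * j')) x = Mf g d v ((cyc ?m ^^ (g * j')) x)" by simp
        also have "\<dots> = ((cyc ?m ^^ (g * j')) x - 1) mod g + g * ((((cyc ?m ^^ (g * j')) x - 1) div g * v) mod d) + 1"
          by (rule Mf_in[OF c1in])
        also have "\<dots> = r + g * ((((s + j') mod d) * v) mod d) + 1"
          unfolding c1 using divmod_split[OF rs(1)] by simp
        finally show ?thesis .
      qed
      have hx: "Mf g d v x = r + g * ((s * v) mod d) + 1" by (simp add: Mf_in[OF x] r_s_def)
      have "(cyc ?m ^^ g \<circ> Mf g d v) x = (r + g * ((s * v) mod d) + g) mod ?m + 1"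
        using range[OF x] hx by (simp add: cyc_pow_in)
      also have "r + g * ((s * v) mod d) + g = r + g * Suc ((s * v) mod d)" by simp
      also have "(r + g * Suc ((s * v) mod d)) mod ?m = r + g * (Suc ((s * v) mod d) mod d)"
        by (rule modgd[OF rs(1)])
      finally have rhs: "(cyc ?m ^^ g \<circ> Mf g d v) x = r + g * (Suc ((s * v) mod d) mod d) + 1" .
      have "(((s + j') mod d) * v) mod d = ((s + j') * v) mod d" by (rule mod_mult_left_eq)
      also have "\<dots> = (s * v + j' * v) mod d" by (simp add: algebra_simps)
      also have "\<dots> = (s * v + (j' * v) mod d) mod d" by (simp add: mod_add_right_eq)
      also have "(j' * v) mod d = 1 mod d" using jv by (simp add: cong_def)
      also have "(s * v + 1 mod d) mod d = Suc (s * v) mod d" by (simp add: mod_add_right_eq)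
      also have "\<dots> = Suc ((s * v) mod d) mod d" by (simp add: mod_Suc_eq)
      finally show ?thesis using lhs rhs by simp
    qed
  qed
  show ?thesis using perm comm by (simp add: Nset_def)
qed

lemma Nset_g_exists:
  assumes m: "0 < m" shows "\<exists>f. f \<in> Nset m (gcd j m) j"
proof -
  define g where "g = gcd j m"
  define d where "d = m div g"
  have g: "0 < g" using m by (simp add: g_def)
  have md: "m = g * d" by (simp add: g_def d_def)
  have d: "0 < d" using m md by (metis gr0I mult_0_right)
  define j' where "j' = j div g"
  have jj: "j = g * j'" by (simp add: j'_def g_def)
  have "coprime j' d" unfolding j'_def d_def g_def by (rule div_gcd_coprime) (use m in simp)
  then obtain v where v: "[j' * v = Suc 0] (mod d)" using cong_solve_coprime_nat by blast
  have "Mf g d v \<in> Nset (g * d) g (g * j')" by (rule Nset_exists[OF g d]) (use v in simp)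
  hence "Mf g d v \<in> Nset m g j" by (simp only: md[symmetric] jj[symmetric])
  thus ?thesis unfolding g_def by blast
qed

lemma Nset_card:
  assumes m: "0 < m"
  shows "card (Nset m k j) = (if gcd k m = gcd j m then fact (gcd j m) * (m div gcd j m) ^ (gcd j m) else 0)"
proof (cases "gcd k m = gcd j m")
  case True
  define g where "g = gcd j m"
  obtain f1 where f1: "f1 \<in> Nset m g j" using Nset_g_exists[OF m] unfolding g_def by blast
  obtain f2 where f2: "f2 \<in> Nset m g k" using Nset_g_exists[OF m, of k] True unfolding g_def by auto
  have f1p: "f1 permutes {1..m}" "cyc m ^^ g \<circ> f1 = f1 \<circ> cyc m ^^ j" using f1 by (auto simp: Nset_def)
  have f2p: "f2 permutes {1..m}" "cyc m ^^ g \<circ> f2 = f2 \<circ> cyc m ^^ k" using f2 by (auto simp: Nset_def)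
  have ci: "inv f2 \<circ> cyc m ^^ g = cyc m ^^ k \<circ> inv f2" by (rule comm_inv[OF f2p])
  have "inv f2 \<circ> f1 \<in> Nset m k j"
  proof -
    have "cyc m ^^ k \<circ> (inv f2 \<circ> f1) = inv f2 \<circ> (cyc m ^^ g \<circ> f1)" using ci by (simp add: o_assoc)
    also have "\<dots> = inv f2 \<circ> f1 \<circ> cyc m ^^ j" using f1p(2) by (simp add: o_assoc)
    finally show ?thesis using permutes_compose[OF f1p(1) permutes_inv[OF f2p(1)]] by (simp add: Nset_def)
  qed
  hence "card (Nset m k j) = card (Nset m j j)" by (rule Nset_transfer)
  also have "\<dots> = card (Nset m g g)" using Nset_gcd[OF m] by (simp add: g_def)
  also have "\<dots> = fact g * (m div g) ^ g"
  proof -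
    have g: "0 < g" using m by (simp add: g_def)
    have md: "m = g * (m div g)" by (simp add: g_def)
    have d: "0 < m div g" using m md by (metis gr0I mult_0_right)
    show ?thesis using Nset_card_gd[OF g d] md by simp
  qed
  finally show ?thesis using True by (simp add: g_def)
next
  case False
  have "Nset m k j = {}" using Nset_nonempty_gcd[OF m] False by blast
  then show ?thesis using False by simp
qed

lemma sum_gcd_group:
  assumes m: "0 < m"
  shows "(\<Sum>k\<in>{0<..m}. (h (gcd k m) :: real)) = (\<Sum>g | g dvd m. real (totient (m div g)) * h g)"
proof -
  have img: "(\<lambda>k. gcd k m) ` {0<..m} = {g. g dvd m}"
  proof
    show "(\<lambda>k. gcd k m) ` {0<..m} \<subseteq> {g. g dvd m}" by auto
    show "{g. g dvd m} \<subseteq> (\<lambda>k. gcd k m) ` {0<..m}"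
    proof
      fix g assume "g \<in> {g. g dvd m}"
      hence "g dvd m" by simp
      hence "gcd g m = g" "g \<in> {0<..m}" using m by (auto simp: gcd_nat.absorb1 dvd_imp_le intro: Nat.gr0I)
      thus "g \<in> (\<lambda>k. gcd k m) ` {0<..m}" by (metis image_eqI)
    qed
  qed
  have "(\<Sum>k\<in>{0<..m}. h (gcd k m)) = (\<Sum>g\<in>(\<lambda>k. gcd k m) ` {0<..m}. \<Sum>k\<in>{k \<in> {0<..m}. gcd k m = g}. h (gcd k m))"
    by (rule sum.image_gen) simp
  also have "\<dots> = (\<Sum>g | g dvd m. \<Sum>k\<in>{k \<in> {0<..m}. gcd k m = g}. h g)"
    unfolding img by (rule sum.cong[OF refl], rule sum.cong[OF refl]) simp
  also have "\<dots> = (\<Sum>g | g dvd m. real (totient (m div g)) * h g)"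
  proof (rule sum.cong[OF refl])
    fix g assume "g \<in> {g. g dvd m}"
    hence "card {k \<in> {0<..m}. gcd k m = g} = totient (m div g)" using card_gcd_eq_totient[OF m, of g] by simp
    thus "(\<Sum>k\<in>{k \<in> {0<..m}. gcd k m = g}. h g) = real (totient (m div g)) * h g" by simp
  qed
  finally show ?thesis .
qed

lemma div_div_dvd:
  assumes "d dvd (m::nat)" "0 < m" shows "m div (m div d) = d" "m div d dvd m"
proof -
  obtain k where k: "m = d * k" using assms(1) by (rule dvdE)
  have "0 < d" "0 < k" using assms(2) k by auto
  thus "m div (m div d) = d" "m div d dvd m" using k by auto
qed

lemma sum_lessThan_shift:
  fixes m :: nat
  assumes m: "0 < m" and "F 0 = F m"
  shows "(\<Sum>k<m. (F k :: real)) = (\<Sum>k\<in>{0<..m}. F k)"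
proof -
  have "(\<Sum>k<m. F k) = (\<Sum>k\<in>{0<..m}. F (k mod m))"
    by (rule sum.reindex_bij_witness[of _ "\<lambda>k. k mod m" "\<lambda>k. if k = 0 then m else k"]) (use m in \<open>auto simp: le_less\<close>)
  also have "\<dots> = (\<Sum>k\<in>{0<..m}. F k)"
    by (rule sum.cong[OF refl]) (use assms in \<open>auto simp: le_less\<close>)
  finally show ?thesis .
qed

lemma double_sum:
  assumes m: "0 < m"
  shows "(\<Sum>k<m. \<Sum>j<m. real (card (Nset m k j))) =
    (\<Sum>d\<in>{d. d dvd m}. real (totient d) ^ 2 * fact (m div d) * real d ^ (m div d))"
proof -
  define F where "F g = real (fact g * (m div g) ^ g)" for g
  have inner: "(\<Sum>j<m. real (card (Nset m k j))) = real (totient (m div gcd k m)) * F (gcd k m)" for k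
  proof -
    have "(\<Sum>j<m. real (card (Nset m k j))) = (\<Sum>j<m. if gcd k m = gcd j m then F (gcd j m) else 0)"
      by (rule sum.cong[OF refl]) (simp add: Nset_card[OF m] F_def)
    also have "\<dots> = (\<Sum>j\<in>{0<..m}. if gcd k m = gcd j m then F (gcd j m) else 0)"
      by (rule sum_lessThan_shift[OF m]) simp
    also have "\<dots> = (\<Sum>g | g dvd m. real (totient (m div g)) * (if gcd k m = g then F g else 0))"
      by (rule sum_gcd_group[OF m])
    also have "\<dots> = (\<Sum>g | g dvd m. if g = gcd k m then real (totient (m div g)) * F g else 0)"
      by (rule sum.cong[OF refl]) auto
    also have "\<dots> = real (totient (m div gcd k m)) * F (gcd k m)"
      using m by (simp add: sum.delta)
    finally show ?thesis .
  qed
  have "(\<Sum>k<m. \<Sum>j<m. real (card (Nset m k j))) = (\<Sum>k<m. real (totient (m div gcd k m)) * F (gcd k m))"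
    by (simp add: inner)
  also have "\<dots> = (\<Sum>k\<in>{0<..m}. real (totient (m div gcd k m)) * F (gcd k m))"
    by (rule sum_lessThan_shift[OF m]) simp
  also have "\<dots> = (\<Sum>g | g dvd m. real (totient (m div g)) * (real (totient (m div g)) * F g))"
    by (rule sum_gcd_group[OF m])
  also have "\<dots> = (\<Sum>d | d dvd m. real (totient d) ^ 2 * fact (m div d) * real d ^ (m div d))"
  proof (rule sum.reindex_bij_witness[of _ "\<lambda>d. m div d" "\<lambda>g. m div g"])
    fix g assume "g \<in> {g. g dvd m}"
    hence g: "g dvd m" by simp
    show "m div (m div g) = g" using div_div_dvd[OF g m] by simp
    show "m div g \<in> {d. d dvd m}" using div_div_dvd[OF g m] by simp
    show "real (totient (m div g)) ^ 2 * fact (m div (m div g)) * real (m div g) ^ (m div (m div g)) =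
          real (totient (m div g)) * (real (totient (m div g)) * F g)"
      using div_div_dvd[OF g m] by (simp add: F_def power2_eq_square)
  next
    fix d assume "d \<in> {d. d dvd m}"
    hence d: "d dvd m" by simp
    show "m div (m div d) = d" using div_div_dvd[OF d m] by simp
    show "m div d \<in> {g. g dvd m}" using div_div_dvd[OF d m] by simp
  qed
  finally show ?thesis by simp
qed

lemma ins_ne: "ins_shift t i \<noteq> Suc t"
  by (auto simp: ins_shift_def)

lemma ins_inj: "ins_shift t i = ins_shift t i' \<Longrightarrow> i = i'"
  by (auto simp: ins_shift_def split: if_splits)

lemma va_ins: "valpha g q t (ins_shift t i) = (if q = Some i then Suc t else ins_shift t (g i))"
proof -
  have "(if ins_shift t i \<le> t then ins_shift t i else ins_shift t i - 1) = i"
    by (auto simp: ins_shift_def)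
  thus ?thesis using ins_ne[of t i] by (simp add: valpha_def Let_def)
qed

lemma va_new: "valpha g (Some q) t (Suc t) = ins_shift t (g q)" "valpha g None t (Suc t) = Suc t"
  by (simp_all add: valpha_def)

lemma ins_cover: "z \<noteq> Suc t \<Longrightarrow> z = ins_shift t (if z \<le> t then z else z - 1)"
  by (auto simp: ins_shift_def)

lemma ins_range: "i \<in> {1..m - 1} \<Longrightarrow> t < m \<Longrightarrow> ins_shift t i \<in> {1..m}"
  by (auto simp: ins_shift_def)

lemma claimA0:
  assumes m: "2 \<le> m" and t: "t < m" shows "valpha g None t \<notin> mcycles m"
proof
  assume "valpha g None t \<in> mcycles m"
  hence c: "is_mcycle m (valpha g None t)" by (simp add: mcycles_def)
  have fx: "(valpha g None t ^^ k) (Suc t) = Suc t" for k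
    by (induction k) (simp_all add: va_new)
  define y :: nat where "y = (if t = 0 then 2 else 1)"
  have "Suc t \<in> {1..m}" "y \<in> {1..m}" "y \<noteq> Suc t" using m t by (auto simp: y_def)
  then obtain k where "(valpha g None t ^^ k) (Suc t) = y" using c unfolding is_mcycle_def by blast
  thus False using fx \<open>y \<noteq> Suc t\<close> by simp
qed

lemma orig_ins: "(if ins_shift t i \<le> t then ins_shift t i else ins_shift t i - 1) = i"
  by (auto simp: ins_shift_def)

lemma claimA:
  assumes c: "valpha g (Some q) t \<in> mcycles m" and t: "t < m"
    and i: "i \<in> {1..m - 1}" and i': "i' \<in> {1..m - 1}"
  shows "\<exists>k. (g ^^ k) i = i'"
proof -
  let ?a = "valpha g (Some q) t"
  define o' where "o' z = (if z = Suc t then g q else if z \<le> t then z else z - 1)" for z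
  have o_ins: "o' (ins_shift t j) = j" for j using ins_ne[of t j] orig_ins[of t j] by (simp add: o'_def)
  have key: "(?a ^^ n) z = ins_shift t i' \<Longrightarrow> \<exists>k. (g ^^ k) (o' z) = i'" for n z
  proof (induction n arbitrary: z)
    case 0
    hence "o' z = i'" using o_ins by simp
    hence "(g ^^ 0) (o' z) = i'" by simp
    thus ?case by (rule exI)
  next
    case (Suc n)
    have "(?a ^^ n) (?a z) = ins_shift t i'" using Suc.prems by (simp add: funpow_swap1)
    then obtain k where k: "(g ^^ k) (o' (?a z)) = i'" using Suc.IH by blast
    show ?case
    proof (cases "z = Suc t")
      case True
      have az: "?a z = ins_shift t (g q)" using True by (simp add: va_new)
      have "o' (?a z) = g q" unfolding az by (rule o_ins)
      moreover have "o' z = g q" using True by (simp add: o'_def)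
      ultimately have "o' (?a z) = o' z" by simp
      thus ?thesis using k by metis
    next
      case False
      define i0 where "i0 = (if z \<le> t then z else z - 1)"
      have z: "z = ins_shift t i0" using ins_cover[OF False] by (simp add: i0_def)
      have oz: "o' z = i0" using z o_ins by simp
      have "o' (?a z) = g i0"
      proof (cases "q = i0")
        case True
        have "?a z = Suc t" using z True by (simp add: va_ins)
        thus ?thesis using True by (simp add: o'_def)
      next
        case False
        have "?a z = ins_shift t (g i0)" using z False by (simp add: va_ins)
        thus ?thesis by (simp add: o_ins)
      qed
      hence "(g ^^ Suc k) (o' z) = i'" using k oz by (simp add: funpow_swap1)
      thus ?thesis by (rule exI)
    qed
  qed
  have "ins_shift t i \<in> {1..m}" "ins_shift t i' \<in> {1..m}" using ins_range[OF i t] ins_range[OF i' t] by auto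
  then obtain n where "(?a ^^ n) (ins_shift t i) = ins_shift t i'"
    using c unfolding mcycles_def is_mcycle_def by blast
  from key[OF this] show ?thesis by (simp add: o_ins)
qed

definition Pt :: "nat \<Rightarrow> nat \<Rightarrow> nat \<Rightarrow> nat" where
  "Pt m t y = (if y = m then Suc t else if y < m then ins_shift t y else y)"

lemma Pt_permutes:
  assumes t: "t < m" shows "Pt m t permutes {1..m}"
proof (rule bij_imp_permutes)
  have inj: "inj_on (Pt m t) {1..m}"
  proof (rule inj_onI)
    fix x y assume x: "x \<in> {1..m}" and y: "y \<in> {1..m}" and e: "Pt m t x = Pt m t y"
    have px: "Pt m t x = (if x = m then Suc t else ins_shift t x)" using x by (simp add: Pt_def)
    have py: "Pt m t y = (if y = m then Suc t else ins_shift t y)" using y by (simp add: Pt_def)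
    show "x = y"
    proof (cases "x = m")
      case True
      show ?thesis
      proof (rule ccontr)
        assume "x \<noteq> y"
        hence "y \<noteq> m" using True by simp
        hence "Suc t = ins_shift t y" using e px py True by simp
        thus False using ins_ne[of t y] by simp
      qed
    next
      case False
      show ?thesis
      proof (cases "y = m")
        case True
        hence "ins_shift t x = Suc t" using e px py False by simp
        thus ?thesis using ins_ne[of t x] by simp
      next
        case yF: False
        hence "ins_shift t x = ins_shift t y" using e px py False by simp
        thus ?thesis by (rule ins_inj)
      qed
    qed
  qed
  have "Pt m t ` {1..m} \<subseteq> {1..m}" using t by (auto simp: Pt_def ins_shift_def)
  thus "bij_betw (Pt m t) {1..m} {1..m}" using endo_inj_surj[OF _ _ inj] inj by (simp add: bij_betw_def)
next
  fix x assume "x \<notin> {1..m}"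
  thus "Pt m t x = x" using t by (auto simp: Pt_def ins_shift_def)
qed

lemma Pt_conj:
  assumes g: "g permutes {1..m - 1}" and q: "q \<in> {1..m - 1}" and t: "t < m"
  shows "valpha g (Some q) t \<circ> Pt m t = Pt m t \<circ> valpha g (Some q) (m - 1)"
proof
  fix y
  have m: "0 < m" using t by simp
  have gq: "g q \<in> {1..m - 1}" using permutes_in_image[OF g] q by simp
  show "(valpha g (Some q) t \<circ> Pt m t) y = (Pt m t \<circ> valpha g (Some q) (m - 1)) y"
  proof (cases "y = m")
    case True
    have "valpha g (Some q) (m - 1) m = valpha g (Some q) (m - 1) (Suc (m - 1))" using m by simp
    also have "\<dots> = g q" using gq by (simp add: va_new ins_shift_def)
    moreover have gqm: "g q < m" "g q \<noteq> m" using gq m by auto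
    ultimately show ?thesis using True by (simp add: Pt_def va_new)
  next
    case ym: False
    show ?thesis
    proof (cases "y < m")
      case True
      have yi: "y = ins_shift (m - 1) y" using True by (simp add: ins_shift_def)
      have gy: "g y < m"
      proof (cases "y \<in> {1..m - 1}")
        case True
        have "g y \<in> {1..m - 1}" using permutes_in_image[OF g, of y] True by simp
        then show ?thesis by auto
      next
        case False then show ?thesis using permutes_not_in[OF g False] \<open>y < m\<close> by simp
      qed
      have gyi: "ins_shift (m - 1) (g y) = g y" using gy by (simp add: ins_shift_def)
      have r: "valpha g (Some q) (m - 1) y = (if q = y then m else g y)"
        using va_ins[of g "Some q" "m - 1" y] yi gyi m by simp
      have Py: "Pt m t y = ins_shift t y" using True ym by (simp add: Pt_def)
      show ?thesis
      proof (cases "q = y")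
        case True
        then show ?thesis using Py r by (simp add: va_ins Pt_def)
      next
        case False
        have "Pt m t (g y) = ins_shift t (g y)" using gy by (simp add: Pt_def)
        then show ?thesis using Py r False by (simp add: va_ins)
      qed
    next
      case False
      hence y: "m < y" using ym by simp
      have y1: "y - 1 \<notin> {1..m - 1}" using y by auto
      have yi: "y = ins_shift (m - 1) (y - 1)" "y = ins_shift t (y - 1)" using y t by (auto simp: ins_shift_def)
      have qy: "q \<noteq> y - 1" using q y by auto
      have "valpha g (Some q) (m - 1) y = y"
        using va_ins[of g "Some q" "m - 1" "y - 1"] yi(1)[symmetric] qy permutes_not_in[OF g y1] by simp
      moreover have "valpha g (Some q) t y = y"
        using va_ins[of g "Some q" t "y - 1"] yi(2)[symmetric] qy permutes_not_in[OF g y1] by simp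
      ultimately show ?thesis using y by (simp add: Pt_def)
    qed
  qed
qed

lemma Pt0: "0 < m \<Longrightarrow> Pt m 0 = cyc m"
  by (auto simp: Pt_def cyc_def ins_shift_def fun_eq_iff)

lemma telescope: "(\<Sum>j\<in>{1..n}. ((f :: nat \<Rightarrow> 'a :: ab_group_add) (j - 1) - f j)) = f 0 - f n"
  by (induction n) (simp_all add: algebra_simps)

lemma alpha0_conj:
  assumes g: "g permutes {1..m - 1}" and q: "q \<in> {1..m - 1}" and m: "0 < m"
  shows "valpha g (Some q) 0 = cconj m (valpha g (Some q) (m - 1))"
proof -
  let ?a0 = "valpha g (Some q) 0" and ?s = "valpha g (Some q) (m - 1)"
  have e: "?a0 \<circ> cyc m = cyc m \<circ> ?s" using Pt_conj[OF g q m] Pt0[OF m] by simp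
  have ci: "cyc m \<circ> cinv m = id" using cyc_cinv_pow(1)[OF m, of 1] by simp
  have "cconj m ?s = (cyc m \<circ> ?s) \<circ> cinv m" by (simp add: cconj_def)
  also have "\<dots> = ?a0 \<circ> (cyc m \<circ> cinv m)" by (simp only: e[symmetric] comp_assoc)
  finally show ?thesis using ci by simp
qed

lemma vass_elt_full:
  assumes g: "g permutes {1..m - 1}" and q: "q \<in> {1..m - 1}" and m: "0 < m"
  shows "vass_elt g (Some q) {1..m - 1} = gvec (cconj m (valpha g (Some q) (m - 1))) - gvec (valpha g (Some q) (m - 1))"
  unfolding vass_elt_def telescope[of "\<lambda>t. gvec (valpha g (Some q) t)"] alpha0_conj[OF g q m] ..

lemma perm_cycles_full:
  assumes m: "2 \<le> m" and g: "g permutes {1..m - 1}"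
    and tr: "\<And>i i'. i \<in> {1..m - 1} \<Longrightarrow> i' \<in> {1..m - 1} \<Longrightarrow> \<exists>k. (g ^^ k) i = i'"
    and j0: "j0 \<in> {1..m - 1}"
  shows "{(g ^^ k) j0 | k. True} = {1..m - 1}"
proof
  show "{(g ^^ k) j0 | k. True} \<subseteq> {1..m - 1}" using permutes_in_funpow_image[OF g j0] by auto
  show "{1..m - 1} \<subseteq> {(g ^^ k) j0 | k. True}"
  proof
    fix x assume "x \<in> {1..m - 1}"
    then obtain k where "(g ^^ k) j0 = x" using tr[OF j0] by blast
    thus "x \<in> {(g ^^ k) j0 | k. True}" by blast
  qed
qed

lemma vass_in_D:
  assumes m: "2 \<le> m" and E: "E \<in> vass_cyc_elts m"
  shows "E \<in> (\<lambda>s. gvec (cconj m s) - gvec s) ` mcycles m"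
proof -
  obtain g q v where E: "E = vass_elt g q v" and g: "g permutes {1..m - 1}"
    and q: "q = None \<or> (\<exists>i\<in>{1..m - 1}. q = Some i)" and v: "v \<in> perm_cycles (m - 1) g"
    and c: "\<forall>j\<in>v. valpha g q (j - 1) \<in> mcycles m \<and> valpha g q j \<in> mcycles m"
    using E unfolding vass_cyc_elts_def by blast
  obtain j0 where j0: "j0 \<in> {1..m - 1}" and vj: "v = {(g ^^ k) j0 | k. True}"
    using v unfolding perm_cycles_def by blast
  have "j0 \<in> v" unfolding vj by (auto intro: exI[of _ 0])
  hence cj: "valpha g q j0 \<in> mcycles m" using c by blast
  have j0m: "j0 < m" using j0 by auto
  have "q \<noteq> None"
  proof
    assume "q = None"
    thus False using claimA0[OF m j0m, of g] cj by simp
  qed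
  then obtain q' where q': "q' \<in> {1..m - 1}" "q = Some q'" using q by auto
  have tr: "\<exists>k. (g ^^ k) i = i'" if "i \<in> {1..m - 1}" "i' \<in> {1..m - 1}" for i i'
    using claimA[OF _ j0m that] cj q'(2) by simp
  have vfull: "v = {1..m - 1}" unfolding vj by (rule perm_cycles_full[OF m g tr j0])
  have "m - 1 \<in> v" using vfull m by auto
  hence sC: "valpha g q (m - 1) \<in> mcycles m" using c by blast
  have "E = gvec (cconj m (valpha g (Some q') (m - 1))) - gvec (valpha g (Some q') (m - 1))"
    unfolding E vfull q'(2) by (rule vass_elt_full[OF g q'(1)]) (use m in simp)
  thus ?thesis using sC q'(2) by blast
qed

lemma D_in_vass:
  assumes m: "2 \<le> m" and sC: "s \<in> mcycles m"
  shows "gvec (cconj m s) - gvec s \<in> vass_cyc_elts m"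
proof -
  have m0: "0 < m" using m by simp
  have sc: "is_mcycle m s" using sC by (simp add: mcycles_def)
  have sp: "s permutes {1..m}" using sc by (simp add: is_mcycle_def)
  have mm: "m \<in> {1..m}" using m by simp
  have smm: "s m \<in> {1..m}" using permutes_in_image[OF sp] mm by simp
  have smne: "s m \<noteq> m"
  proof
    assume sm: "s m = m"
    have fx: "(s ^^ k) m = m" for k by (induction k) (simp_all add: sm)
    have "1 \<in> {1..m}" using m by simp
    then obtain k where "(s ^^ k) m = 1" using sc mm unfolding is_mcycle_def by blast
    thus False using fx m by simp
  qed
  define g where "g = Transposition.transpose m (s m) \<circ> s"
  have gpm: "g permutes {1..m}" unfolding g_def by (intro permutes_compose sp permutes_swap_id mm smm)
  have gm: "g m = m" by (simp add: g_def)
  have gp: "g permutes {1..m - 1}"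
  proof (rule permutes_superset[OF gpm])
    fix x assume "x \<in> {1..m} - {1..m - 1}"
    hence "x = m" by auto
    thus "g x = x" using gm by simp
  qed
  define q where "q = inv s m"
  have sq: "s q = m" using permutes_inverses(1)[OF sp] by (simp add: q_def)
  have qin: "q \<in> {1..m}" using permutes_in_image[OF permutes_inv[OF sp]] mm by (simp add: q_def)
  have qne: "q \<noteq> m" using sq smne by auto
  have q1: "q \<in> {1..m - 1}" using qin qne by auto
  have smle: "s m \<le> m - 1" using smm smne by auto
  have aeq: "valpha g (Some q) (m - 1) = s"
  proof
    fix y show "valpha g (Some q) (m - 1) y = s y"
    proof (cases "y = m")
      case True
      have "valpha g (Some q) (m - 1) y = valpha g (Some q) (m - 1) (Suc (m - 1))" using True m by simp
      also have "\<dots> = ins_shift (m - 1) (g q)" by (simp add: va_new)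
      also have "g q = s m" by (simp add: g_def sq)
      also have "ins_shift (m - 1) (s m) = s m" using smle by (simp add: ins_shift_def)
      finally show ?thesis using True by simp
    next
      case False
      define i0 where "i0 = (if y \<le> m - 1 then y else y - 1)"
      have yne: "y \<noteq> Suc (m - 1)" using False m by simp
      have y: "y = ins_shift (m - 1) i0" using ins_cover[OF yne] by (simp add: i0_def)
      have va: "valpha g (Some q) (m - 1) y = (if q = i0 then Suc (m - 1) else ins_shift (m - 1) (g i0))"
        using va_ins[of g "Some q" "m - 1" i0] y by simp
      show ?thesis
      proof (cases "y < m")
        case True
        hence i0y: "i0 = y" by (simp add: i0_def)
        show ?thesis
        proof (cases "q = y")
          case True
          then show ?thesis using va i0y sq m by simp
        next
          case qy: False
          have "s y \<noteq> m" using qy sq permutes_inj[OF sp] by (auto dest: injD)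
          moreover have "s y \<noteq> s m" using True permutes_inj[OF sp] by (auto dest: injD)
          ultimately have gy: "g y = s y" by (simp add: g_def)
          have "s y \<le> m - 1"
          proof (cases "y = 0")
            case True
            have "0 \<notin> {1..m}" by simp
            thus ?thesis using permutes_not_in[OF sp] True by simp
          next
            case False
            hence "y \<in> {1..m}" using \<open>y < m\<close> by simp
            hence "s y \<in> {1..m}" using permutes_in_image[OF sp] by simp
            thus ?thesis using \<open>s y \<noteq> m\<close> by auto
          qed
          hence "ins_shift (m - 1) (s y) = s y" by (simp add: ins_shift_def)
          then show ?thesis using va i0y qy gy by simp
        qed
      next
        case False
        hence ym: "m < y" using \<open>y \<noteq> m\<close> by simp
        hence i0y: "i0 = y - 1" by (simp add: i0_def)
        have i0n: "i0 \<notin> {1..m - 1}" using ym i0y m by auto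
        have "q \<noteq> i0" using q1 i0n by auto
        moreover have "g i0 = i0" using permutes_not_in[OF gp i0n] .
        moreover have "ins_shift (m - 1) i0 = y" using ym i0y m by (simp add: ins_shift_def)
        moreover have "s y = y" using permutes_not_in[OF sp] ym by simp
        ultimately show ?thesis using va by simp
      qed
    qed
  qed
  have tr: "\<exists>k. (g ^^ k) i = i'" if "i \<in> {1..m - 1}" "i' \<in> {1..m - 1}" for i i'
    using claimA[of g q "m - 1" m i i'] aeq sC that m by simp
  have one: "1 \<in> {1..m - 1}" using m by simp
  have vfull: "{1..m - 1} \<in> perm_cycles (m - 1) g"
    unfolding perm_cycles_def using perm_cycles_full[OF m gp tr one] one by blast
  have allC: "valpha g (Some q) t \<in> mcycles m" if "t < m" for t
  proof -
    have "valpha g (Some q) t \<circ> Pt m t = Pt m t \<circ> s" using Pt_conj[OF gp q1 that] aeq by simp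
    from mcycle_conj[OF Pt_permutes[OF that] sc this] show ?thesis by (simp add: mcycles_def)
  qed
  have cond: "\<forall>j\<in>{1..m - 1}. valpha g (Some q) (j - 1) \<in> mcycles m \<and> valpha g (Some q) j \<in> mcycles m"
    using allC by auto
  have "vass_elt g (Some q) {1..m - 1} = gvec (cconj m s) - gvec s"
    using vass_elt_full[OF gp q1 m0] aeq by simp
  moreover have "vass_elt g (Some q) {1..m - 1} \<in> vass_cyc_elts m"
    unfolding vass_cyc_elts_def using m gp q1 vfull cond by blast
  ultimately show ?thesis by simp
qed

lemma vass_eq_D:
  assumes m: "2 \<le> m"
  shows "vass_cyc_elts m = (\<lambda>s. gvec (cconj m s) - gvec s) ` mcycles m"
  using vass_in_D[OF m] D_in_vass[OF m] by blast

definition rep :: "nat \<Rightarrow> (nat \<Rightarrow> nat) \<Rightarrow> nat \<Rightarrow> nat" where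
  "rep m s = (SOME t. t \<in> orbC m s)"

lemma rep_in: "0 < m \<Longrightarrow> rep m s \<in> orbC m s"
  unfolding rep_def by (rule someI[of _ s]) (rule orbC_self)

lemma rep_eq: assumes "0 < m" "t \<in> orbC m s" shows "rep m t = rep m s"
proof -
  have "orbC m t = orbC m s" by (rule orbC_eq[OF assms])
  thus ?thesis unfolding rep_def by simp
qed

lemma cconj_1: "cconj 1 s = s"
proof -
  have "cyc 1 = id" by (auto simp: cyc_def fun_eq_iff)
  moreover have "cinv 1 = id" by (simp add: cinv_def)
  ultimately show ?thesis by (simp add: cconj_def)
qed

lemma adad: "(a::'a::ab_group_add) - c = (a - b) + (b - c)" by simp

lemma ddd: "(a::'a::ab_group_add) - c - (b - c) = a - b" by simp

lemma span_vass_D: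
  assumes m: "0 < m"
  shows "G.span (vass_cyc_elts m) = G.span ((\<lambda>s. gvec (cconj m s) - gvec s) ` mcycles m)"
proof (cases "2 \<le> m")
  case True
  then show ?thesis using vass_eq_D by simp
next
  case False
  hence m1: "m = 1" using m by simp
  have e: "vass_cyc_elts m = {}" using False by (simp add: vass_cyc_elts_def)
  have d: "(\<lambda>s. gvec (cconj m s) - gvec s) ` mcycles m \<subseteq> G.span {}"
  proof
    fix x assume "x \<in> (\<lambda>s. gvec (cconj m s) - gvec s) ` mcycles m"
    then obtain s where "x = gvec (cconj m s) - gvec s" by blast
    hence "x = 0" unfolding m1 cconj_1 by (rule trans) (rule diff_self)
    thus "x \<in> G.span {}" using G.span_zero by simp
  qed
  have "G.span {} = G.span ((\<lambda>s. gvec (cconj m s) - gvec s) ` mcycles m)"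
    by (rule G.span_eq[THEN iffD2]) (use d in blast)
  thus ?thesis unfolding e .
qed

lemma span_D_B:
  assumes m: "0 < m"
  defines "C \<equiv> mcycles m"
  defines "R \<equiv> {s \<in> C. rep m s = s}"
  shows "G.span ((\<lambda>s. gvec (cconj m s) - gvec s) ` C) = G.span ((\<lambda>s. gvec s - gvec (rep m s)) ` (C - R))"
proof -
  let ?D = "(\<lambda>s. gvec (cconj m s) - gvec s) ` C"
  let ?B = "(\<lambda>s. gvec s - gvec (rep m s)) ` (C - R)"
  have bb: "gvec s - gvec (rep m s) \<in> G.span ?B" if "s \<in> C" for s
  proof (cases "s \<in> R")
    case True
    hence "gvec s - gvec (rep m s) = 0" by (simp add: R_def)
    then show ?thesis using G.span_zero by simp
  next
    case False
    hence "gvec s - gvec (rep m s) \<in> ?B" using that by blast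
    thus ?thesis by (rule G.span_base)
  qed
  have DB: "?D \<subseteq> G.span ?B"
  proof
    fix x assume "x \<in> ?D"
    then obtain s where s: "s \<in> C" and x: "x = gvec (cconj m s) - gvec s" by blast
    have cs: "cconj m s \<in> C" using conj_mcycle[OF m, of s 1] s by (simp add: C_def)
    have "cconj m s \<in> orbC m s" unfolding orbC_all[OF m] by (auto intro: exI[of _ 1])
    hence r: "rep m (cconj m s) = rep m s" by (rule rep_eq[OF m])
    have xe: "x = (gvec (cconj m s) - gvec (rep m (cconj m s))) - (gvec s - gvec (rep m s))"
      unfolding x r by (rule ddd[symmetric])
    show "x \<in> G.span ?B" unfolding xe by (rule G.span_diff[OF bb[OF cs] bb[OF s]])
  qed
  have pw: "gvec ((cconj m ^^ k) s) - gvec s \<in> G.span ?D" if "s \<in> C" for s k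
  proof (induction k)
    case 0
    have "gvec ((cconj m ^^ 0) s) - gvec s = 0" by (simp only: funpow_0 id_apply diff_self)
    thus ?case using G.span_zero[of ?D] by (simp only:)
  next
    case (Suc k)
    have ck: "(cconj m ^^ k) s \<in> C" using conj_mcycle[OF m] that by (simp add: C_def)
    have eq: "gvec ((cconj m ^^ Suc k) s) - gvec s =
      (gvec (cconj m ((cconj m ^^ k) s)) - gvec ((cconj m ^^ k) s)) + (gvec ((cconj m ^^ k) s) - gvec s)"
      by (simp only: funpow.simps o_apply) (rule adad)
    have mem: "gvec (cconj m ((cconj m ^^ k) s)) - gvec ((cconj m ^^ k) s) \<in> G.span ?D"
      using ck by (intro G.span_base) blast
    show ?case unfolding eq by (rule G.span_add[OF mem Suc])
  qed
  have BD: "?B \<subseteq> G.span ?D"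
  proof
    fix x assume "x \<in> ?B"
    then obtain s where s: "s \<in> C" and x: "x = gvec s - gvec (rep m s)" by blast
    obtain k where k: "rep m s = (cconj m ^^ k) s" using rep_in[OF m, of s] unfolding orbC_all[OF m] by blast
    have xe: "x = - (gvec ((cconj m ^^ k) s) - gvec s)" unfolding x k by (rule minus_diff_eq[symmetric])
    show "x \<in> G.span ?D" unfolding xe by (rule G.span_neg[OF pw[OF s, of k]])
  qed
  show ?thesis using DB BD G.span_eq[of ?D ?B] by blast
qed

theorem theorem16:
  fixes m :: nat
  assumes "1 \<le> m"
  shows "real (dim_H m) =
    (\<Sum>d\<in>{d. d dvd m}. real (totient d) ^ 2 * fact (m div d) * real d ^ (m div d))
      / real m ^ 2"
proof -
  have m: "0 < m" using assms by simp
  define C where "C = mcycles m"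
  define R where "R = {s \<in> C. rep m s = s}"
  have finC: "finite C" unfolding C_def by (rule finite_mcycles)
  have RC: "R \<subseteq> C" by (auto simp: R_def)
  have repC: "rep m ` C \<subseteq> R"
  proof
    fix x assume "x \<in> rep m ` C"
    then obtain s where s: "s \<in> C" "x = rep m s" by blast
    have "rep m s \<in> C" using orbC_subset_C[OF m] rep_in[OF m, of s] s by (auto simp: C_def)
    moreover have "rep m (rep m s) = rep m s" by (rule rep_eq[OF m rep_in[OF m]])
    ultimately show "x \<in> R" using s by (simp add: R_def)
  qed
  have sp: "G.span (vass_cyc_elts m) = G.span ((\<lambda>s. gvec s - gvec (rep m s)) ` (C - R))"
    using span_vass_D[OF m] span_D_B[OF m] by (simp add: C_def R_def)
  have dimR: "dim_H m = card R"
    unfolding dim_H_def C_def[symmetric] by (rule dim_quot_general[OF finC RC repC sp])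
  have cardR: "card R = card (orbC m ` C)"
  proof -
    have "bij_betw (orbC m) R (orbC m ` C)"
      unfolding bij_betw_def
    proof
      show "inj_on (orbC m) R"
      proof (rule inj_onI)
        fix s t assume "s \<in> R" "t \<in> R" "orbC m s = orbC m t"
        hence "s = rep m s" "t = rep m t" "rep m s = rep m t" by (auto simp: R_def rep_def)
        thus "s = t" by simp
      qed
      show "orbC m ` R = orbC m ` C"
      proof
        show "orbC m ` R \<subseteq> orbC m ` C" using RC by auto
        show "orbC m ` C \<subseteq> orbC m ` R"
        proof
          fix O' assume "O' \<in> orbC m ` C"
          then obtain s where s: "s \<in> C" "O' = orbC m s" by blast
          have "rep m s \<in> R" using repC s by auto
          moreover have "orbC m (rep m s) = orbC m s" by (rule orbC_eq[OF m rep_in[OF m]])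
          ultimately show "O' \<in> orbC m ` R" using s by (metis image_eqI)
        qed
      qed
    qed
    thus ?thesis by (rule bij_betw_same_card)
  qed
  have "real m * real m * real (card (orbC m ` C)) = real m * (\<Sum>k<m. real (card (FixC m k)))"
    using burnside[OF m] by (simp add: C_def)
  also have "\<dots> = (\<Sum>k<m. real (m * card (FixC m k)))" by (simp add: sum_distrib_left)
  also have "\<dots> = (\<Sum>k<m. \<Sum>j<m. real (card (Nset m k j)))"
    by (rule sum.cong[OF refl]) (simp add: fix_count[OF m])
  also have "\<dots> = (\<Sum>d\<in>{d. d dvd m}. real (totient d) ^ 2 * fact (m div d) * real d ^ (m div d))"
    by (rule double_sum[OF m])
  finally have "real m ^ 2 * real (dim_H m) = (\<Sum>d\<in>{d. d dvd m}. real (totient d) ^ 2 * fact (m div d) * real d ^ (m div d))"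
    using dimR cardR by (simp add: power2_eq_square)
  thus ?thesis using m by (simp add: field_simps)
qed

end
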